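(* For every spine grammar $\mathcal G$ there is a normalized spine grammar $\mathcal G'$ with $T(\mathcal G')=T(\mathcal G)$.
   Context: sCFTG: $\mathcal G=(N,\Sigma,S,P)$ with disjoint ranked alphabets $N=N_0\cup N_1$ (nullary/unary nonterminals) and $\Sigma=\Sigma_0\cup\Sigma_2$ (no unary terminals), start $S\in N_0$, finite productions $n\to r$ with $n\in N_0$ and $r$ a tree with inner nodes in $\Sigma_2\cup N_1$ (rank 2 resp. 1) and leaves in $N_0\cup\Sigma_0$, or $n\to C$ with $n\in N_1$ and $C$ such a tree additionally containing exactly one leaf $\Box$. A step replaces an occurrence of $n\in N_0$ by $r$, or a subtree $n(t')$ with $n\in N_1$ by $C$ with $\Box$ replaced by $t'$. $T(\mathcal G)$ is the set of trees over $\Sigma$ derivable from $S$. Spine grammar: an sCFTG with a map $d:\Sigma_2\to\{1,2\}$ such that for every production $n\to C$ with $n\in N_1$ and every position $w$ on the path from the root of $C$ to $\Box$ with $C(w)\in\Sigma_2$, the path continues to child $d(C(w))$ of $w$. Normal form: every production has one of the forms (i) start: $n\to b(\alpha)$ or $n\to\alpha$ with $b\in N_1$, $\alpha\in\Sigma_0$; (ii) chain: $n\to b_1(b_2(\Box))$ with $b_1,b_2\in N_1$; (iii) terminal: $n\to\sigma(\Box,a)$ or $n\to\sigma(a,\Box)$ with $\sigma\in\Sigma_2$, $a\in N_0\setminus\{S\}$. For $n\in N_0$, the spinal trees $I_{\mathcal G}(n)$ are the trees $t$ (over $\Sigma_2$, leaves in $\Sigma_0\cup N_0$) obtained from $n$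 by one derivation step of $\mathcal G$ followed by any number of steps using only productions with left-hand side in $N_1$. $\mathcal G$ is normalized if it is in normal form and for every $n\in N_0$ no tree of $I_{\mathcal G}(n)$ contains $n$. *)

theory Defs
  imports Main
begin

text \<open>Sentential-form trees: leaves are the hole, nullary nonterminals, nullary terminals;
inner nodes are unary nonterminals (rank 1) or binary terminals (rank 2).
There are no unary terminals.\<close>
datatype ('n, 't) tr =
    Hole
  | NL 'n
  | TL 't
  | NU 'n "('n, 't) tr"
  | TB 't "('n, 't) tr" "('n, 't) tr"

datatype 't ttree = Leaf 't | Bin 't "'t ttree" "'t ttree"

fun embed :: "'t ttree \<Rightarrow> ('n, 't) tr" where
  "embed (Leaf a) = TL a"
| "embed (Bin s l r) = TB s (embed l) (embed r)"

fun holes :: "('n, 't) tr \<Rightarrow> nat" where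
  "holes Hole = 1"
| "holes (NL n) = 0"
| "holes (TL a) = 0"
| "holes (NU n t) = holes t"
| "holes (TB s l r) = holes l + holes r"

fun subst :: "('n, 't) tr \<Rightarrow> ('n, 't) tr \<Rightarrow> ('n, 't) tr" where
  "subst Hole u = u"
| "subst (NL n) u = NL n"
| "subst (TL a) u = TL a"
| "subst (NU n t) u = NU n (subst t u)"
| "subst (TB s l r) u = TB s (subst l u) (subst r u)"

fun nts0_of :: "('n, 't) tr \<Rightarrow> 'n set" where
  "nts0_of Hole = {}"
| "nts0_of (NL n) = {n}"
| "nts0_of (TL a) = {}"
| "nts0_of (NU n t) = nts0_of t"
| "nts0_of (TB s l r) = nts0_of l \<union> nts0_of r"

fun no_unary :: "('n, 't) tr \<Rightarrow> bool" where
  "no_unary Hole = True"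
| "no_unary (NL n) = True"
| "no_unary (TL a) = True"
| "no_unary (NU n t) = False"
| "no_unary (TB s l r) = (no_unary l \<and> no_unary r)"

fun ttree_over :: "'t set \<Rightarrow> 't set \<Rightarrow> 't ttree \<Rightarrow> bool" where
  "ttree_over S0 S2 (Leaf a) = (a \<in> S0)"
| "ttree_over S0 S2 (Bin s l r) = (s \<in> S2 \<and> ttree_over S0 S2 l \<and> ttree_over S0 S2 r)"

record ('n, 't) scftg =
  nts0 :: "'n set"
  nts1 :: "'n set"
  ts0 :: "'t set"
  ts2 :: "'t set"
  start :: 'n
  prods :: "('n \<times> ('n, 't) tr) set"

fun wf_tree :: "'n set \<Rightarrow> 'n set \<Rightarrow> 't set \<Rightarrow> 't set \<Rightarrow> ('n, 't) tr \<Rightarrow> bool" where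
  "wf_tree N0 N1 S0 S2 Hole = True"
| "wf_tree N0 N1 S0 S2 (NL n) = (n \<in> N0)"
| "wf_tree N0 N1 S0 S2 (TL a) = (a \<in> S0)"
| "wf_tree N0 N1 S0 S2 (NU n t) = (n \<in> N1 \<and> wf_tree N0 N1 S0 S2 t)"
| "wf_tree N0 N1 S0 S2 (TB s l r) = (s \<in> S2 \<and> wf_tree N0 N1 S0 S2 l \<and> wf_tree N0 N1 S0 S2 r)"

definition sCFTG :: "('n, 't) scftg \<Rightarrow> bool" where
  "sCFTG G \<longleftrightarrow>
     finite (nts0 G) \<and> finite (nts1 G) \<and> finite (ts0 G) \<and> finite (ts2 G) \<and>
     nts0 G \<inter> nts1 G = {} \<and> ts0 G \<inter> ts2 G = {} \<and>
     start G \<in> nts0 G \<and> finite (prods G) \<and>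
     (\<forall>(n, r) \<in> prods G.
        wf_tree (nts0 G) (nts1 G) (ts0 G) (ts2 G) r \<and>
        ((n \<in> nts0 G \<and> holes r = 0) \<or> (n \<in> nts1 G \<and> holes r = 1)))"

inductive step :: "'n set \<Rightarrow> 'n set \<Rightarrow> ('n \<times> ('n, 't) tr) set
                   \<Rightarrow> ('n, 't) tr \<Rightarrow> ('n, 't) tr \<Rightarrow> bool"
  for N0 N1 P where
  rule0: "(n, r) \<in> P \<Longrightarrow> n \<in> N0 \<Longrightarrow> step N0 N1 P (NL n) r"
| rule1: "(n, C) \<in> P \<Longrightarrow> n \<in> N1 \<Longrightarrow> step N0 N1 P (NU n t) (subst C t)"
| congU: "step N0 N1 P t t' \<Longrightarrow> step N0 N1 P (NU n t) (NU n t')"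
| congL: "step N0 N1 P l l' \<Longrightarrow> step N0 N1 P (TB s l r) (TB s l' r)"
| congR: "step N0 N1 P r r' \<Longrightarrow> step N0 N1 P (TB s l r) (TB s l r')"

abbreviation gstep :: "('n, 't) scftg \<Rightarrow> ('n, 't) tr \<Rightarrow> ('n, 't) tr \<Rightarrow> bool" where
  "gstep G \<equiv> step (nts0 G) (nts1 G) (prods G)"

definition lang :: "('n, 't) scftg \<Rightarrow> 't ttree set" where
  "lang G = {u. ttree_over (ts0 G) (ts2 G) u \<and> (gstep G)\<^sup>*\<^sup>* (NL (start G)) (embed u)}"

fun spine_ok :: "('t \<Rightarrow> nat) \<Rightarrow> ('n, 't) tr \<Rightarrow> bool" where
  "spine_ok d Hole = True"
| "spine_ok d (NL n) = True"
| "spine_ok d (TL a) = True"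
| "spine_ok d (NU n t) = spine_ok d t"
| "spine_ok d (TB s l r) =
     (if holes l > 0 then d s = 1 \<and> spine_ok d l
      else if holes r > 0 then d s = 2 \<and> spine_ok d r
      else True)"

definition spine_grammar :: "('n, 't) scftg \<Rightarrow> bool" where
  "spine_grammar G \<longleftrightarrow> sCFTG G \<and>
     (\<exists>d :: 't \<Rightarrow> nat. (\<forall>\<sigma> \<in> ts2 G. d \<sigma> \<in> {1, 2}) \<and>
        (\<forall>(n, C) \<in> prods G. n \<in> nts1 G \<longrightarrow> spine_ok d C))"

definition normal_form :: "('n, 't) scftg \<Rightarrow> bool" where
  "normal_form G \<longleftrightarrow>
     (\<forall>(n, r) \<in> prods G.
        \<comment> \<open>start productions\<close>
        (n \<in> nts0 G \<and>
          ((\<exists>b \<in> nts1 G. \<exists>\<alpha> \<in> ts0 G. r = NU b (TL \<alpha>)) \<or> (\<exists>\<alpha> \<in> ts0 G. r = TL \<alpha>)))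
        \<comment> \<open>chain productions\<close>
      \<or> (n \<in> nts1 G \<and> (\<exists>b1 \<in> nts1 G. \<exists>b2 \<in> nts1 G. r = NU b1 (NU b2 Hole)))
        \<comment> \<open>terminal productions\<close>
      \<or> (n \<in> nts1 G \<and> (\<exists>\<sigma> \<in> ts2 G. \<exists>a \<in> nts0 G - {start G}.
             r = TB \<sigma> Hole (NL a) \<or> r = TB \<sigma> (NL a) Hole)))"

definition spinal :: "('n, 't) scftg \<Rightarrow> 'n \<Rightarrow> ('n, 't) tr set" where
  "spinal G n = {t. \<exists>t1. gstep G (NL n) t1 \<and>
      (step (nts0 G) (nts1 G) {p \<in> prods G. fst p \<in> nts1 G})\<^sup>*\<^sup>* t1 t \<and>
      no_unary t \<and> holes t = 0}"

definition normalized :: "('n, 't) scftg \<Rightarrow> bool" where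
  "normalized G \<longleftrightarrow> normal_form G \<and>
     (\<forall>n \<in> nts0 G. \<forall>t \<in> spinal G n. n \<notin> nts0_of t)"

end

theory Submission imports Defs begin

fun trm :: "('n,'t) tr \<Rightarrow> bool" where
  "trm Hole = True"
| "trm (NL n) = False"
| "trm (TL a) = True"
| "trm (NU n t) = False"
| "trm (TB s l r) = (trm l \<and> trm r)"

fun ht :: "('n,'t) tr \<Rightarrow> nat" where
  "ht Hole = 0"
| "ht (NL n) = 0"
| "ht (TL a) = 0"
| "ht (NU n t) = Suc (ht t)"
| "ht (TB s l r) = Suc (max (ht l) (ht r))"

fun wt :: "('n,'t) tr \<Rightarrow> nat" where
  "wt Hole = 0"
| "wt (NL n) = 1"
| "wt (TL a) = 1"
| "wt (NU n t) = Suc (wt t)"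
| "wt (TB s l r) = Suc (wt l + wt r)"

lemma subst_Hole_right[simp]: "subst t Hole = t"
  by (induction t) auto

lemma subst_assoc: "subst (subst a b) c = subst a (subst b c)"
  by (induction a) auto

lemma holes_subst[simp]: "holes (subst p y) = holes p * holes y"
  by (induction p) (auto simp: algebra_simps)

lemma subst_holes0: "holes t = 0 \<Longrightarrow> subst t u = t"
  by (induction t) auto

lemma trm_subst: "trm (subst p y) = (trm p \<and> (holes p > 0 \<longrightarrow> trm y))"
  by (induction p) auto

lemma spine_holes0: "holes t = 0 \<Longrightarrow> spine_ok d t"
  by (induction t) auto

lemma spine_subst:
  "holes p = 1 \<Longrightarrow> holes y = 1 \<Longrightarrow> spine_ok d (subst p y) = (spine_ok d p \<and> spine_ok d y)"
proof (induction p)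
  case (TB s l r)
  then show ?case
    by (cases "holes l") (auto simp: subst_holes0)
qed auto

lemma spine_subst2:
  "holes p = 1 \<Longrightarrow> spine_ok d p \<Longrightarrow> spine_ok d y \<Longrightarrow> spine_ok d (subst p y)"
proof (induction p)
  case (TB s l r)
  then show ?case
    by (cases "holes l") (auto simp: subst_holes0)
qed auto

lemma wt_subst: "holes c = 1 \<Longrightarrow> wt (subst c x) = wt c + wt x"
proof (induction c)
  case (TB s l r)
  then show ?case by (cases "holes l") (auto simp: subst_holes0)
qed auto

lemma subst_eq_Hole: "subst a b = Hole \<Longrightarrow> a = Hole \<or> (a \<noteq> Hole \<and> False) \<or> (a = Hole)"
  by (cases a) auto

lemma subst_Hole_iff: "subst a b = Hole \<longleftrightarrow> a = Hole \<and> b = Hole"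
  by (cases a) auto

lemma wf_subst: "wf_tree N0 N1 S0 S2 c \<Longrightarrow> wf_tree N0 N1 S0 S2 w \<Longrightarrow> wf_tree N0 N1 S0 S2 (subst c w)"
  by (induction c) auto

lemma wf_subst_D: "wf_tree N0 N1 S0 S2 (subst c w) \<Longrightarrow> holes c > 0 \<Longrightarrow> wf_tree N0 N1 S0 S2 w"
  by (induction c) auto

lemma wf_subst_D1: "wf_tree N0 N1 S0 S2 (subst c w) \<Longrightarrow> wf_tree N0 N1 S0 S2 c"
  by (induction c) auto

lemma embed_trm: "trm (embed u)" and embed_holes: "holes (embed u) = 0"
  by (induction u) auto


section \<open>Derivation semantics\<close>

inductive gen :: "'n set \<Rightarrow> 'n set \<Rightarrow> ('n \<times> ('n, 't) tr) set \<Rightarrow> ('n, 't) tr \<Rightarrow> ('n, 't) tr \<Rightarrow> bool"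
  for N0 N1 P where
  gHole: "gen N0 N1 P Hole Hole"
| gTL: "gen N0 N1 P (TL a) (TL a)"
| gNL: "(n, r) \<in> P \<Longrightarrow> n \<in> N0 \<Longrightarrow> gen N0 N1 P r v \<Longrightarrow> gen N0 N1 P (NL n) v"
| gNU: "(n, C) \<in> P \<Longrightarrow> n \<in> N1 \<Longrightarrow> gen N0 N1 P C c \<Longrightarrow> gen N0 N1 P t w \<Longrightarrow> gen N0 N1 P (NU n t) (subst c w)"
| gTB: "gen N0 N1 P l l' \<Longrightarrow> gen N0 N1 P r r' \<Longrightarrow> gen N0 N1 P (TB s l r) (TB s l' r')"

inductive_cases genHoleE: "gen N0 N1 P Hole v"
inductive_cases genTLE: "gen N0 N1 P (TL a) v"
inductive_cases genNLE: "gen N0 N1 P (NL n) v"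
inductive_cases genNUE: "gen N0 N1 P (NU n t) v"
inductive_cases genTBE: "gen N0 N1 P (TB s l r) v"

inductive_cases stepNLE: "step N0 N1 P (NL n) v"

locale gl =
  fixes N0 N1 :: "'n set" and P :: "('n \<times> ('n, 't) tr) set"
  assumes disj: "N0 \<inter> N1 = {}"
  and pok: "(n, r) \<in> P \<Longrightarrow> (n \<in> N0 \<and> holes r = 0) \<or> (n \<in> N1 \<and> holes r = 1)"
begin

abbreviation "g \<equiv> gen N0 N1 P"
abbreviation "st \<equiv> step N0 N1 P"

lemma pok0: "(n, r) \<in> P \<Longrightarrow> n \<in> N0 \<Longrightarrow> holes r = 0"
  using pok disj by blast

lemma pok1: "(n, r) \<in> P \<Longrightarrow> n \<in> N1 \<Longrightarrow> holes r = 1"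
  using pok disj by blast

lemma gen_holes: "g t v \<Longrightarrow> holes v = holes t"
  by (induction rule: gen.induct) (auto simp: pok0 pok1)

lemma gen_trm: "g t v \<Longrightarrow> trm v"
  by (induction rule: gen.induct) (auto simp: trm_subst)

lemma gen_refl: "trm v \<Longrightarrow> g v v"
  by (induction v) (auto intro: gen.intros)

lemma gen_comp: "g p q \<Longrightarrow> g A a \<Longrightarrow> g (subst p A) (subst q a)"
proof (induction rule: gen.induct)
  case (gNL n r v)
  then have "holes v = 0" using gen_holes pok0 by metis
  then show ?case using gNL by (auto simp: subst_holes0 intro: gen.intros)
next
  case (gNU n C c t w)
  then show ?case using gen.gNU[where t="subst t A" and w="subst w a" and n=n and C=C and c=c] by (auto simp: subst_assoc)
qed (auto intro: gen.intros)

lemma gen_decomp: "g (subst p w) v \<Longrightarrow> holes p = 1 \<Longrightarrow> \<exists>q y. g p q \<and> g w y \<and> v = subst q y"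
proof (induction p arbitrary: v)
  case Hole
  then show ?case by (auto intro: gen.intros)
next
  case (NU n t)
  from NU.prems(1) obtain C c x where "(n,C) \<in> P" "n \<in> N1" "g C c" "g (subst t w) x" "v = subst c x"
    by (auto elim: genNUE)
  moreover from NU obtain q y where "g t q" "g w y" "x = subst q y" using calculation by (metis holes.simps(4))
  ultimately show ?case
    by (intro exI[of _ "subst c q"] exI[of _ y]) (auto intro: gen.intros simp: subst_assoc)
next
  case (TB s l r)
  show ?case
  proof (cases "holes l")
    case 0
    then have hr: "holes r = 1" using TB by simp
    from TB.prems(1) 0 obtain l' r' where "g l l'" "g (subst r w) r'" "v = TB s l' r'"
      by (auto simp: subst_holes0 elim: genTBE)
    moreover from TB.IH(2) hr calculation obtain q y where "g r q" "g w y" "r' = subst q y" by blast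
    moreover have "holes l' = 0" using gen_holes calculation 0 by metis
    ultimately show ?thesis
      by (intro exI[of _ "TB s l' q"] exI[of _ y]) (auto intro: gen.intros simp: subst_holes0)
  next
    case (Suc k)
    then have hl: "holes l = 1" "holes r = 0" using TB by auto
    from TB.prems(1) hl obtain l' r' where "g (subst l w) l'" "g r r'" "v = TB s l' r'"
      by (auto simp: subst_holes0 elim: genTBE)
    moreover from TB.IH(1) hl calculation obtain q y where "g l q" "g w y" "l' = subst q y" by blast
    moreover have "holes r' = 0" using gen_holes calculation hl by metis
    ultimately show ?thesis
      by (intro exI[of _ "TB s q r'"] exI[of _ y]) (auto intro: gen.intros simp: subst_holes0)
  qed
qed auto

lemma step_subst_left: "st C C' \<Longrightarrow> st (subst C t) (subst C' t)"
proof (induction rule: step.induct)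
  case (rule0 n r)
  then show ?case using pok0 by (auto simp: subst_holes0 intro: step.intros)
next
  case (rule1 n C t')
  then show ?case using step.rule1[where t="subst t' t" and n=n and C=C] by (auto simp: subst_assoc)
qed (auto intro: step.intros)

lemma steps_subst_left: "st\<^sup>*\<^sup>* C C' \<Longrightarrow> st\<^sup>*\<^sup>* (subst C t) (subst C' t)"
  by (induction rule: rtranclp_induct) (auto intro: rtranclp.rtrancl_into_rtrancl step_subst_left)

lemma steps_cong: 
  "st\<^sup>*\<^sup>* t t' \<Longrightarrow> st\<^sup>*\<^sup>* (NU n t) (NU n t')"
  "st\<^sup>*\<^sup>* t t' \<Longrightarrow> st\<^sup>*\<^sup>* (TB s t r) (TB s t' r)"
  "st\<^sup>*\<^sup>* t t' \<Longrightarrow> st\<^sup>*\<^sup>* (TB s l t) (TB s l t')"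
  by (induction rule: rtranclp_induct) (auto intro: rtranclp.rtrancl_into_rtrancl step.intros)

lemma steps_subst_right: "st\<^sup>*\<^sup>* t t' \<Longrightarrow> st\<^sup>*\<^sup>* (subst c t) (subst c t')"
proof (induction c)
  case (NU n c)
  then show ?case using steps_cong(1) by auto
next
  case (TB s l r)
  then show ?case using steps_cong(2,3) by (metis rtranclp_trans subst.simps(5))
qed auto

lemma gen_steps: "g t v \<Longrightarrow> st\<^sup>*\<^sup>* t v"
proof (induction rule: gen.induct)
  case (gNL n r v)
  then show ?case by (meson converse_rtranclp_into_rtranclp step.rule0)
next
  case (gNU n C c t w)
  have "st (NU n t) (subst C t)" using gNU by (auto intro: step.intros)
  moreover have "st\<^sup>*\<^sup>* (subst C t) (subst c t)" using gNU steps_subst_left by auto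
  moreover have "st\<^sup>*\<^sup>* (subst c t) (subst c w)" using gNU steps_subst_right by auto
  ultimately show ?case by (meson converse_rtranclp_into_rtranclp rtranclp_trans)
next
  case (gTB l l' r r' s)
  then show ?case using steps_cong(2,3) by (meson rtranclp_trans)
qed auto

lemma step_gen: "st t t' \<Longrightarrow> g t' v \<Longrightarrow> g t v"
proof (induction arbitrary: v rule: step.induct)
  case (rule0 n r)
  then show ?case by (auto intro: gen.intros)
next
  case (rule1 n C t)
  then obtain q y where "g C q" "g t y" "v = subst q y" using gen_decomp pok1 by blast
  then show ?case using rule1 by (auto intro: gen.intros)
next
  case (congU t t' n)
  then show ?case by (auto elim!: genNUE intro: gen.intros)
next
  case (congL l l' s r)
  then show ?case by (auto elim!: genTBE intro: gen.intros)
next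
  case (congR r r' s l)
  then show ?case by (auto elim!: genTBE intro: gen.intros)
qed

lemma steps_gen: "st\<^sup>*\<^sup>* t v \<Longrightarrow> trm v \<Longrightarrow> g t v"
  by (induction rule: converse_rtranclp_induct) (auto intro: gen_refl step_gen)

lemma steps_iff_gen: "trm v \<Longrightarrow> st\<^sup>*\<^sup>* t v \<longleftrightarrow> g t v"
  using steps_gen gen_steps by blast

end


section \<open>Spine locale\<close>

datatype ('n, 't) nt = Ux bool "('n, 't) tr \<times> ('n \<times> 't) option" | Zx bool "('n, 't) tr" | St

fun conv :: "('a, 't) tr \<Rightarrow> ('b, 't) tr" where
  "conv Hole = Hole"
| "conv (TL a) = TL a"
| "conv (NL n) = Hole"
| "conv (NU n t) = Hole"
| "conv (TB s l r) = TB s (conv l) (conv r)"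

lemma conv_subst: "trm c \<Longrightarrow> conv (subst c w) = subst (conv c) (conv w)"
  by (induction c) auto

lemma conv_embed[simp]: "conv (embed u) = embed u"
  by (induction u) auto


locale sl = gl N0 N1 P for N0 N1 :: "'n set" and P :: "('n \<times> ('n, 't) tr) set" +
  fixes S0 S2 :: "'t set" and S :: 'n and d :: "'t \<Rightarrow> nat" and K :: nat
  assumes finN0: "finite N0" and finN1: "finite N1" and finS0: "finite S0" and finS2: "finite S2"
  and disjS: "S0 \<inter> S2 = {}" and S_in: "S \<in> N0"
  and pwf: "(n, r) \<in> P \<Longrightarrow> wf_tree N0 N1 S0 S2 r \<and> ht r \<le> K"
  and pspine: "(n, C) \<in> P \<Longrightarrow> n \<in> N1 \<Longrightarrow> spine_ok d C"
  and d12: "d \<sigma> = 1 \<or> d \<sigma> = 2"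
  and K1: "1 \<le> K"
begin

abbreviation "wfg \<equiv> wf_tree N0 N1 S0 S2"

definition ctx :: "('n, 't) tr \<Rightarrow> bool" where
  "ctx c \<longleftrightarrow> holes c = 1 \<and> spine_ok d c \<and> trm c"

definition Ee :: "('n \<times> 't) option \<Rightarrow> ('n, 't) tr \<Rightarrow> bool" where
  "Ee e c2 = (case e of None \<Rightarrow> c2 = Hole | Some (m, \<alpha>) \<Rightarrow> ctx c2 \<and> g (NL m) (subst c2 (TL \<alpha>)))"

definition Lx :: "('n, 't) tr \<times> ('n \<times> 't) option \<Rightarrow> ('n, 't) tr set" where
  "Lx X = {subst c1 c2 | c1 c2. g (fst X) c1 \<and> ctx c1 \<and> Ee (snd X) c2}"

definition TK :: "('n, 't) tr set" where "TK = {t. wfg t \<and> ht t \<le> K}"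

definition Fs :: "(('n, 't) tr \<times> ('n \<times> 't) option) set" where
  "Fs = {X. fst X \<in> TK \<and> (case snd X of None \<Rightarrow> True | Some (m, \<alpha>) \<Rightarrow> m \<in> N0 \<and> \<alpha> \<in> S0)}"

definition Hs :: "('n, 't) tr set" where "Hs = {s \<in> TK. holes s = 0}"

definition subl where
  "subl Y Z X \<longleftrightarrow> (\<forall>c1 c2. c1 \<in> Lx Y \<longrightarrow> c2 \<in> Lx Z \<longrightarrow> subst c1 c2 \<in> Lx X)"

definition Rs where
  "Rs X c \<longleftrightarrow> (\<exists>Y Z c1 c2. Y \<in> Fs \<and> Z \<in> Fs \<and> subl Y Z X \<and> c = subst c1 c2 \<and> c1 \<in> Lx Y \<and> c2 \<in> Lx Z
        \<and> c1 \<noteq> Hole \<and> c2 \<noteq> Hole)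
     \<or> (\<exists>\<sigma> s u. s \<in> Hs \<and> \<sigma> \<in> S2 \<and> g s u \<and>
          ((d \<sigma> = 1 \<and> c = TB \<sigma> Hole u \<and> Lx (TB \<sigma> Hole s, None) \<subseteq> Lx X)
         \<or> (d \<sigma> = 2 \<and> c = TB \<sigma> u Hole \<and> Lx (TB \<sigma> s Hole, None) \<subseteq> Lx X)))"

fun cut_it :: "('n, 't) tr \<Rightarrow> 't \<Rightarrow> ('n, 't) tr \<times> ('n \<times> 't) option" where
  "cut_it Hole \<alpha> = (Hole, None)"
| "cut_it (TL a) \<alpha> = (if a = \<alpha> then Hole else TL a, None)"
| "cut_it (NL m) \<alpha> = (Hole, Some (m, \<alpha>))"
| "cut_it (NU b t) \<alpha> = (NU b (fst (cut_it t \<alpha>)), snd (cut_it t \<alpha>))"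
| "cut_it (TB \<sigma> l r) \<alpha> = (if d \<sigma> = 1 then (TB \<sigma> (fst (cut_it l \<alpha>)) r, snd (cut_it l \<alpha>))
                                    else (TB \<sigma> l (fst (cut_it r \<alpha>)), snd (cut_it r \<alpha>)))"

lemma ctx_Hole[simp]: "ctx Hole" by (simp add: ctx_def)

lemma ctx_TB: "ctx (TB \<sigma> l r) \<longleftrightarrow> (d \<sigma> = 1 \<and> ctx l \<and> holes r = 0 \<and> trm r) \<or> (d \<sigma> = 2 \<and> ctx r \<and> holes l = 0 \<and> trm l)"
  using d12[of \<sigma>] by (auto simp: ctx_def)

lemma ctx_comp: "ctx p \<Longrightarrow> ctx y \<Longrightarrow> ctx (subst p y)"
  by (auto simp: ctx_def spine_subst trm_subst)

lemma ctx_split: "holes p = 1 \<Longrightarrow> holes y = 1 \<Longrightarrow> ctx (subst p y) \<Longrightarrow> ctx p \<and> ctx y"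
  by (auto simp: ctx_def spine_subst trm_subst)

lemma ctx_not: "ctx (NL n) = False" "ctx (NU n t) = False" "ctx (TL a) = False"
  by (auto simp: ctx_def)

lemma dsplit: "trm v \<Longrightarrow> holes v = 0 \<Longrightarrow> \<exists>c \<alpha>. v = subst c (TL \<alpha>) \<and> ctx c"
proof (induction v)
  case (TL x)
  then show ?case by (intro exI[of _ Hole]) auto
next
  case (TB s l r)
  show ?case
  proof (cases "d s = 1")
    case True
    from TB obtain c \<alpha> where "l = subst c (TL \<alpha>)" "ctx c" by auto
    then show ?thesis using TB True
      by (intro exI[of _ "TB s c r"] exI[of _ \<alpha>]) (auto simp: ctx_TB subst_holes0)
  next
    case False
    then have "d s = 2" using d12 by metis
    from TB obtain c \<alpha> where "r = subst c (TL \<alpha>)" "ctx c" by auto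
    then show ?thesis using TB \<open>d s = 2\<close>
      by (intro exI[of _ "TB s l c"] exI[of _ \<alpha>]) (auto simp: ctx_TB subst_holes0)
  qed
qed auto

lemma uniq: "ctx c \<Longrightarrow> ctx c' \<Longrightarrow> subst c (TL \<alpha>) = subst c' (TL \<alpha>') \<Longrightarrow> c = c' \<and> \<alpha> = \<alpha>'"
proof (induction c arbitrary: c')
  case Hole
  from Hole.prems(2,3) show ?case by (cases c') (simp_all add: ctx_not)
next
  case (TB s l r)
  from TB.prems(3) obtain l' r' where c': "c' = TB s l' r'" "subst l (TL \<alpha>) = subst l' (TL \<alpha>')" "subst r (TL \<alpha>) = subst r' (TL \<alpha>')"
    by (cases c') auto
  show ?case
  proof (cases "d s = 1")
    case True
    then have "ctx l" "holes r = 0" "ctx l'" "holes r' = 0" using TB.prems(1,2) c'(1) ctx_TB by auto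
    then show ?thesis using TB.IH(1)[of l'] c' by (simp add: subst_holes0)
  next
    case False
    then have "ctx r" "holes l = 0" "ctx r'" "holes l' = 0" using TB.prems(1,2) c'(1) ctx_TB by auto
    then show ?thesis using TB.IH(2)[of r'] c' by (simp add: subst_holes0)
  qed
next
  case (NL n) from NL.prems(1) show ?case by (simp add: ctx_not)
next
  case (TL n) from TL.prems(1) show ?case by (simp add: ctx_not)
next
  case (NU n t) from NU.prems(1) show ?case by (simp add: ctx_not)
qed

lemma gen_wf: "g t v \<Longrightarrow> wfg t \<Longrightarrow> wfg v"
  by (induction rule: gen.induct) (auto simp: pwf wf_subst)

lemma gen_spine: "g t v \<Longrightarrow> spine_ok d t \<Longrightarrow> spine_ok d v"
proof (induction rule: gen.induct)
  case (gNL n r v)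
  then show ?case using gen_holes pok0 spine_holes0 by metis
next
  case (gNU n C c t w)
  then show ?case using spine_subst2 gen_holes pok1 pspine by (metis spine_ok.simps(4))
next
  case (gTB l l' r r' s)
  then show ?case using gen_holes by auto
qed auto

lemma Lx_ctx: "x \<in> Lx X \<Longrightarrow> ctx x"
  by (auto simp: Lx_def Ee_def ctx_comp split: option.splits)

lemma Lx_None: "x \<in> Lx (C, None) \<longleftrightarrow> g C x \<and> ctx x"
  by (auto simp: Lx_def Ee_def)

lemma Lx_SomeHole: "x \<in> Lx (Hole, Some (m, \<alpha>)) \<longleftrightarrow> ctx x \<and> g (NL m) (subst x (TL \<alpha>))"
proof
  assume "x \<in> Lx (Hole, Some (m, \<alpha>))"
  then show "ctx x \<and> g (NL m) (subst x (TL \<alpha>))" by (auto simp: Lx_def Ee_def elim: genHoleE)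
next
  assume "ctx x \<and> g (NL m) (subst x (TL \<alpha>))"
  then show "x \<in> Lx (Hole, Some (m, \<alpha>))" unfolding Lx_def Ee_def
    by simp (rule exI[of _ Hole], rule exI[of _ x], auto intro: gen.intros)
qed

lemma ExtL: "p \<in> Lx (Q, None) \<Longrightarrow> x \<in> Lx (w, e) \<Longrightarrow> subst p x \<in> Lx (subst Q w, e)"
  unfolding Lx_def Ee_def
  by simp (metis ctx_comp gen_comp subst_assoc)

lemma ExtL': "p \<in> Lx (Q, None) \<Longrightarrow> x \<in> Lx W \<Longrightarrow> subst p x \<in> Lx (subst Q (fst W), snd W)"
  using ExtL[of p Q x "fst W" "snd W"] by simp

lemma DecompL: "x \<in> Lx (subst Q w, e) \<Longrightarrow> holes Q = 1 \<Longrightarrow> \<exists>p y. x = subst p y \<and> p \<in> Lx (Q, None) \<and> y \<in> Lx (w, e)"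
proof -
  assume x: "x \<in> Lx (subst Q w, e)" and hQ: "holes Q = 1"
  then obtain x1 x2 where x1: "x = subst x1 x2" "g (subst Q w) x1" "ctx x1" "Ee e x2"
    by (auto simp: Lx_def)
  then obtain p y1 where py: "g Q p" "g w y1" "x1 = subst p y1" using gen_decomp hQ by blast
  have "holes p = 1" using gen_holes py hQ by metis
  moreover have "holes y1 = 1" using x1(3) py(3) calculation by (simp add: ctx_def)
  ultimately have "ctx p" "ctx y1" using ctx_split x1 py by blast+
  moreover have "subst y1 x2 \<in> Lx (w, e)" using py x1 \<open>ctx y1\<close> unfolding Lx_def by auto
  moreover have "p \<in> Lx (Q, None)" using py \<open>ctx p\<close> by (simp add: Lx_None)
  ultimately show ?thesis using x1 py
    by (intro exI[of _ p] exI[of _ "subst y1 x2"]) (auto simp: subst_assoc)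
qed

lemma DecompL': "x \<in> Lx (subst Q (fst W), snd W) \<Longrightarrow> holes Q = 1 \<Longrightarrow> \<exists>p y. x = subst p y \<and> p \<in> Lx (Q, None) \<and> y \<in> Lx W"
  using DecompL[of x Q "fst W" "snd W"] by simp

lemma D_step:
  assumes s: "s = subst Q t" and hQ: "holes Q = 1" and ht0: "holes t = 0" and sQ: "spine_ok d Q"
  and cs: "cut_it s \<alpha> = (subst Q (fst (cut_it t \<alpha>)), snd (cut_it t \<alpha>))"
  and IH: "\<forall>c. g t (subst c (TL \<alpha>)) \<longrightarrow> ctx c \<longrightarrow> c \<in> Lx (cut_it t \<alpha>)"
  and IH': "\<forall>c. c \<in> Lx (cut_it t \<alpha>) \<longrightarrow> g t (subst c (TL \<alpha>))"
  shows "(g s (subst c (TL \<alpha>)) \<longrightarrow> ctx c \<longrightarrow> c \<in> Lx (cut_it s \<alpha>)) \<and> (c \<in> Lx (cut_it s \<alpha>) \<longrightarrow> g s (subst c (TL \<alpha>)))"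
proof (intro conjI impI)
  assume a: "g s (subst c (TL \<alpha>))" "ctx c"
  then obtain p y where py: "g Q p" "g t y" "subst c (TL \<alpha>) = subst p y"
    using gen_decomp s hQ by blast
  have "holes y = 0" "trm y" using gen_holes gen_trm py ht0 by metis+
  then obtain cy \<alpha>' where cy: "y = subst cy (TL \<alpha>')" "ctx cy" using dsplit by blast
  have "ctx p" using gen_holes[OF py(1)] gen_spine[OF py(1) sQ] gen_trm[OF py(1)] hQ by (simp add: ctx_def)
  then have "ctx (subst p cy)" using cy ctx_comp by blast
  then have "c = subst p cy \<and> \<alpha> = \<alpha>'" using uniq[OF a(2)] py(3) cy(1) by (simp add: subst_assoc)
  moreover have "cy \<in> Lx (cut_it t \<alpha>)" using IH py cy calculation by auto
  moreover have "p \<in> Lx (Q, None)" using py \<open>ctx p\<close> by (simp add: Lx_None)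
  ultimately show "c \<in> Lx (cut_it s \<alpha>)" using ExtL' cs by metis
next
  assume "c \<in> Lx (cut_it s \<alpha>)"
  then obtain p y where "c = subst p y" "p \<in> Lx (Q, None)" "y \<in> Lx (cut_it t \<alpha>)"
    using DecompL' cs hQ by metis
  then show "g s (subst c (TL \<alpha>))"
    using IH' gen_comp s by (simp add: Lx_None subst_assoc)
qed

lemma D_both: "holes s = 0 \<Longrightarrow> (g s (subst c (TL \<alpha>)) \<longrightarrow> ctx c \<longrightarrow> c \<in> Lx (cut_it s \<alpha>)) \<and> (c \<in> Lx (cut_it s \<alpha>) \<longrightarrow> g s (subst c (TL \<alpha>)))"
proof (induction s arbitrary: c)
  case (TL a)
  show ?case
  proof (intro conjI impI)
    assume "g (TL a) (subst c (TL \<alpha>))" "ctx c"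
    then show "c \<in> Lx (cut_it (TL a) \<alpha>)"
      by (cases c) (auto elim!: genTLE simp: ctx_not Lx_None intro: gen.intros)
  next
    assume "c \<in> Lx (cut_it (TL a) \<alpha>)"
    then show "g (TL a) (subst c (TL \<alpha>))"
      by (cases "a = \<alpha>") (auto simp: Lx_None ctx_not elim!: genHoleE genTLE intro: gen.intros)
  qed
next
  case (NL m)
  then show ?case by (auto simp: Lx_SomeHole)
next
  case (NU b t)
  show ?case
    by (rule D_step[where Q = "NU b Hole" and t = t]) (use NU in auto)
next
  case (TB \<sigma> l r)
  show ?case
  proof (cases "d \<sigma> = 1")
    case True
    show ?thesis
      by (rule D_step[where Q = "TB \<sigma> Hole r" and t = l]) (use TB True in \<open>auto simp: subst_holes0\<close>)
  next
    case False
    show ?thesis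
      by (rule D_step[where Q = "TB \<sigma> l Hole" and t = r]) (use TB False d12 in \<open>auto simp: subst_holes0\<close>)
  qed
qed auto

lemma D: "holes s = 0 \<Longrightarrow> g s (subst c (TL \<alpha>)) \<Longrightarrow> ctx c \<Longrightarrow> c \<in> Lx (cut_it s \<alpha>)"
  using D_both by blast

lemma D': "holes s = 0 \<Longrightarrow> c \<in> Lx (cut_it s \<alpha>) \<Longrightarrow> g s (subst c (TL \<alpha>))"
  using D_both by blast


lemma cut_props: "wfg t \<Longrightarrow> \<alpha> \<in> S0 \<Longrightarrow> ht (fst (cut_it t \<alpha>)) \<le> ht t \<and> wfg (fst (cut_it t \<alpha>))
   \<and> (case snd (cut_it t \<alpha>) of None \<Rightarrow> True | Some (m, \<beta>) \<Rightarrow> m \<in> N0 \<and> \<beta> \<in> S0)"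
  by (induction t) auto

lemma cut_Fs: "t \<in> TK \<Longrightarrow> \<alpha> \<in> S0 \<Longrightarrow> cut_it t \<alpha> \<in> Fs"
  using cut_props[of t \<alpha>] by (auto simp: TK_def Fs_def)

lemma R_mono: "Rs X c \<Longrightarrow> Lx X \<subseteq> Lx X' \<Longrightarrow> Rs X' c"
  unfolding Rs_def subl_def by blast

lemma R_split:
  assumes "(Q, None) \<in> Fs" "W \<in> Fs" "subl (Q, None) W X" "p \<in> Lx (Q, None)" "y \<in> Lx W"
    "c = subst p y" "c \<noteq> Hole" "p = Hole \<Longrightarrow> Rs W y" "y = Hole \<Longrightarrow> Rs (Q, None) p"
  shows "Rs X c"
proof (cases "p = Hole")
  case True
  have "Lx W \<subseteq> Lx X" using assms(3,4) True unfolding subl_def by (metis subsetI subst.simps(1))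
  then show ?thesis using R_mono assms True by simp
next
  case False
  show ?thesis
  proof (cases "y = Hole")
    case True
    have "Lx (Q, None) \<subseteq> Lx X" using assms(3,5) True unfolding subl_def by (metis subsetI subst_Hole_right)
    then show ?thesis using R_mono assms True by simp
  next
    case False
    then show ?thesis using \<open>p \<noteq> Hole\<close> assms unfolding Rs_def by blast
  qed
qed

lemma R_letter1: assumes "d \<sigma> = 1" "\<sigma> \<in> S2" "r \<in> Hs" "p \<in> Lx (TB \<sigma> Hole r, None)" shows "Rs (TB \<sigma> Hole r, None) p"
proof -
  from assms(4) obtain r' where "p = TB \<sigma> Hole r'" "g r r'" by (auto simp: Lx_None elim!: genTBE genHoleE)
  then show ?thesis unfolding Rs_def using assms(1-3) by blast
qed

lemma R_letter2: assumes "d \<sigma> = 2" "\<sigma> \<in> S2" "r \<in> Hs" "p \<in> Lx (TB \<sigma> r Hole, None)" shows "Rs (TB \<sigma> r Hole, None) p"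
proof -
  from assms(4) obtain r' where "p = TB \<sigma> r' Hole" "g r r'" by (auto simp: Lx_None elim!: genTBE genHoleE)
  then show ?thesis unfolding Rs_def using assms(1-3) by blast
qed

lemma subl_ext: "subl (Q, None) W (subst Q (fst W), snd W)"
  unfolding subl_def using ExtL' by blast


lemma TB_case1:
  assumes "d \<sigma> = 1" "\<sigma> \<in> S2" "r \<in> Hs" "W \<in> Fs" "y \<in> Lx W" "g r r'"
    "subl (TB \<sigma> Hole r, None) W X" "Suc (ht r) \<le> K"
  shows "Rs X (TB \<sigma> y r')"
proof -
  have hr: "holes r' = 0" "trm r'" using gen_holes gen_trm assms(3,6) by (auto simp: Hs_def)
  have p: "TB \<sigma> Hole r' \<in> Lx (TB \<sigma> Hole r, None)"
    using assms(1,6) hr by (auto simp: Lx_None ctx_TB intro: gen.intros)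
  have QF: "(TB \<sigma> Hole r, None) \<in> Fs" using assms(2,3,8) K1 by (auto simp: Fs_def TK_def Hs_def)
  show ?thesis
    by (rule R_split[OF QF assms(4) assms(7) p assms(5)])
       (use hr assms R_letter1[OF assms(1-3) p] in \<open>auto simp: subst_holes0\<close>)
qed

lemma TB_case2:
  assumes "d \<sigma> = 2" "\<sigma> \<in> S2" "l \<in> Hs" "W \<in> Fs" "y \<in> Lx W" "g l l'"
    "subl (TB \<sigma> l Hole, None) W X" "Suc (ht l) \<le> K"
  shows "Rs X (TB \<sigma> l' y)"
proof -
  have hr: "holes l' = 0" "trm l'" using gen_holes gen_trm assms(3,6) by (auto simp: Hs_def)
  have p: "TB \<sigma> l' Hole \<in> Lx (TB \<sigma> l Hole, None)"
    using assms(1,6) hr by (auto simp: Lx_None ctx_TB intro: gen.intros)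
  have QF: "(TB \<sigma> l Hole, None) \<in> Fs" using assms(2,3,8) K1 by (auto simp: Fs_def TK_def Hs_def)
  show ?thesis
    by (rule R_split[OF QF assms(4) assms(7) p assms(5)])
       (use hr assms R_letter2[OF assms(1-3) p] in \<open>auto simp: subst_holes0\<close>)
qed

lemma Qlem: "g t v \<Longrightarrow> wfg t \<Longrightarrow> ht t \<le> K \<Longrightarrow>
  (holes t = 1 \<longrightarrow> ctx v \<longrightarrow> v \<noteq> Hole \<longrightarrow> Rs (t, None) v) \<and>
  (holes t = 0 \<longrightarrow> (\<forall>c \<alpha>. \<alpha> \<in> S0 \<longrightarrow> v = subst c (TL \<alpha>) \<longrightarrow> ctx c \<longrightarrow> c \<noteq> Hole \<longrightarrow> Rs (cut_it t \<alpha>) c))"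
proof (induction rule: gen.induct)
  case gHole
  then show ?case by simp
next
  case (gTL a)
  have "\<forall>c \<alpha>. TL a = subst c (TL \<alpha>) \<longrightarrow> ctx c \<longrightarrow> c \<noteq> Hole \<longrightarrow> False"
    by (intro allI, case_tac c) (auto simp: ctx_not)
  then show ?case by auto
next
  case (gNL n r v)
  have r: "wfg r" "ht r \<le> K" "holes r = 0" using pwf pok0 gNL by auto
  show ?case
  proof (intro conjI impI allI)
    fix c \<alpha> assume a: "\<alpha> \<in> S0" "v = subst c (TL \<alpha>)" "ctx c" "c \<noteq> Hole"
    have "Rs (cut_it r \<alpha>) c" using gNL.IH r a by blast
    moreover have "Lx (cut_it r \<alpha>) \<subseteq> Lx (cut_it (NL n) \<alpha>)"
    proof
      fix x assume x: "x \<in> Lx (cut_it r \<alpha>)"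
      then have "g r (subst x (TL \<alpha>))" "ctx x" using D' Lx_ctx r by blast+
      then show "x \<in> Lx (cut_it (NL n) \<alpha>)" using gNL by (auto simp: Lx_SomeHole intro: gen.intros)
    qed
    ultimately show "Rs (cut_it (NL n) \<alpha>) c" using R_mono by blast
  qed simp
next
  case (gNU n C c t0 w)
  have f: "wfg t0" "n \<in> N1" "ht t0 \<le> K" using gNU.prems by auto
  have fC: "wfg C" "ht C \<le> K" "holes C = 1" "spine_ok d C" using pwf pok1 pspine gNU.hyps by auto
  have ctxc: "ctx c" using gen_holes[OF gNU.hyps(3)] gen_spine[OF gNU.hyps(3)] gen_trm[OF gNU.hyps(3)] fC
    by (simp add: ctx_def)
  have IH1: "c \<noteq> Hole \<Longrightarrow> Rs (C, None) c" using gNU.IH(1) fC ctxc by blast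
  have pin: "c \<in> Lx (NU n Hole, None)"
    using gen.gNU[OF gNU.hyps(1,2,3) gen.gHole] ctxc by (simp add: Lx_None)
  have QF: "(NU n Hole, None) \<in> Fs" using f K1 by (auto simp: Fs_def TK_def)
  have RQ: "c \<noteq> Hole \<Longrightarrow> Rs (NU n Hole, None) c"
  proof -
    assume "c \<noteq> Hole"
    moreover have "Lx (C, None) \<subseteq> Lx (NU n Hole, None)"
      using gen.gNU[OF gNU.hyps(1,2) _ gen.gHole] by (auto simp: Lx_None)
    ultimately show ?thesis using IH1 R_mono by blast
  qed
  show ?case
  proof (intro conjI impI allI)
    assume a: "holes (NU n t0) = 1" "ctx (subst c w)" "subst c w \<noteq> Hole"
    have hw: "holes w = 1" using a gen_holes[OF gNU.hyps(4)] by simp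
    have hc: "holes c = 1" using ctxc by (simp add: ctx_def)
    have cw: "ctx w" using ctx_split[OF hc hw a(2)] by blast
    have win: "w \<in> Lx (t0, None)" using cw gNU.hyps(4) by (simp add: Lx_None)
    have WF: "(t0, None) \<in> Fs" using f by (auto simp: Fs_def TK_def)
    have sl: "subl (NU n Hole, None) (t0, None) (NU n t0, None)" using subl_ext[of "NU n Hole" "(t0, None)"] by simp
    show "Rs (NU n t0, None) (subst c w)"
    proof (rule R_split[OF QF WF sl pin win refl a(3)])
      assume "c = Hole" then show "Rs (t0, None) w" using gNU.IH(2) f a hw cw by auto
    next
      assume "w = Hole" then show "Rs (NU n Hole, None) c" using RQ a(3) by auto
    qed
  next
    fix cc \<alpha> assume a: "holes (NU n t0) = 0" "\<alpha> \<in> S0" "subst c w = subst cc (TL \<alpha>)" "ctx cc" "cc \<noteq> Hole"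
    have hw: "holes w = 0" "trm w" using a gen_holes[OF gNU.hyps(4)] gen_trm[OF gNU.hyps(4)] by auto
    then obtain cw \<alpha>' where cw: "w = subst cw (TL \<alpha>')" "ctx cw" using dsplit by blast
    have "ctx (subst c cw)" using ctx_comp ctxc cw by blast
    moreover have "subst cc (TL \<alpha>) = subst (subst c cw) (TL \<alpha>')" using a(3) cw by (simp add: subst_assoc)
    ultimately have e: "cc = subst c cw" "\<alpha> = \<alpha>'" using uniq[OF a(4)] by blast+
    have WF: "cut_it t0 \<alpha> \<in> Fs" using cut_Fs f a by (auto simp: TK_def)
    have win: "cw \<in> Lx (cut_it t0 \<alpha>)" using D a hw gNU.hyps(4) cw e by auto
    have sl: "subl (NU n Hole, None) (cut_it t0 \<alpha>) (cut_it (NU n t0) \<alpha>)"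
      using subl_ext[of "NU n Hole" "cut_it t0 \<alpha>"] by simp
    show "Rs (cut_it (NU n t0) \<alpha>) cc"
    proof (rule R_split[OF QF WF sl pin win e(1) a(5)])
      assume "c = Hole" then show "Rs (cut_it t0 \<alpha>) cw" using gNU.IH(2) f a hw cw e by auto
    next
      assume "cw = Hole" then show "Rs (NU n Hole, None) c" using RQ a(5) e by auto
    qed
  qed
next
  case (gTB l l' r r' \<sigma>)
  have f: "\<sigma> \<in> S2" "wfg l" "wfg r" "ht l \<le> K" "ht r \<le> K" "Suc (ht l) \<le> K" "Suc (ht r) \<le> K" using gTB.prems by auto
  have h: "holes l' = holes l" "holes r' = holes r" "trm l'" "trm r'" using gen_holes gen_trm gTB.hyps by auto
  show ?case
  proof (intro conjI impI allI)
    assume a: "holes (TB \<sigma> l r) = 1" "ctx (TB \<sigma> l' r')" "TB \<sigma> l' r' \<noteq> Hole"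
    show "Rs (TB \<sigma> l r, None) (TB \<sigma> l' r')"
    proof (cases "d \<sigma> = 1")
      case True
      then have c: "ctx l'" "holes r' = 0" using a ctx_TB by auto
      then have "r \<in> Hs" "(l, None) \<in> Fs" "l' \<in> Lx (l, None)" using f h gTB.hyps
        by (auto simp: Hs_def TK_def Fs_def Lx_None)
      moreover have "subl (TB \<sigma> Hole r, None) (l, None) (TB \<sigma> l r, None)"
        using subl_ext[of "TB \<sigma> Hole r" "(l, None)"] c h by (simp add: subst_holes0)
      ultimately show ?thesis using TB_case1[OF True f(1)] gTB.hyps f(7) by blast
    next
      case False
      then have d2: "d \<sigma> = 2" using d12 by metis
      then have c: "ctx r'" "holes l' = 0" using a ctx_TB by auto
      then have "l \<in> Hs" "(r, None) \<in> Fs" "r' \<in> Lx (r, None)" using f h gTB.hyps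
        by (auto simp: Hs_def TK_def Fs_def Lx_None)
      moreover have "subl (TB \<sigma> l Hole, None) (r, None) (TB \<sigma> l r, None)"
        using subl_ext[of "TB \<sigma> l Hole" "(r, None)"] c h by (simp add: subst_holes0)
      ultimately show ?thesis using TB_case2[OF d2 f(1)] gTB.hyps f(6) by blast
    qed
  next
    fix cc \<alpha> assume a: "holes (TB \<sigma> l r) = 0" "\<alpha> \<in> S0" "TB \<sigma> l' r' = subst cc (TL \<alpha>)" "ctx cc" "cc \<noteq> Hole"
    from a(3) obtain cl cr where cc: "cc = TB \<sigma> cl cr" "l' = subst cl (TL \<alpha>)" "r' = subst cr (TL \<alpha>)"
      by (cases cc) auto
    show "Rs (cut_it (TB \<sigma> l r) \<alpha>) cc"
    proof (cases "d \<sigma> = 1")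
      case True
      then have c: "ctx cl" "holes cr = 0" using a(4) cc ctx_TB by auto
      then have e: "r' = cr" using cc subst_holes0 by metis
      have "r \<in> Hs" "cut_it l \<alpha> \<in> Fs" "cl \<in> Lx (cut_it l \<alpha>)" using f h a gTB.hyps c cc cut_Fs D
        by (auto simp: Hs_def TK_def)
      moreover have "subl (TB \<sigma> Hole r, None) (cut_it l \<alpha>) (cut_it (TB \<sigma> l r) \<alpha>)"
        using subl_ext[of "TB \<sigma> Hole r" "cut_it l \<alpha>"] True a by (simp add: subst_holes0)
      ultimately show ?thesis using TB_case1[OF True f(1)] gTB.hyps f(7) e cc by blast
    next
      case False
      then have d2: "d \<sigma> = 2" using d12 by metis
      then have c: "ctx cr" "holes cl = 0" using a(4) cc ctx_TB by auto
      then have e: "l' = cl" using cc subst_holes0 by metis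
      have "l \<in> Hs" "cut_it r \<alpha> \<in> Fs" "cr \<in> Lx (cut_it r \<alpha>)" using f h a gTB.hyps c cc cut_Fs D
        by (auto simp: Hs_def TK_def)
      moreover have "subl (TB \<sigma> l Hole, None) (cut_it r \<alpha>) (cut_it (TB \<sigma> l r) \<alpha>)"
        using subl_ext[of "TB \<sigma> l Hole" "cut_it r \<alpha>"] False a by (simp add: subst_holes0)
      ultimately show ?thesis using TB_case2[OF d2 f(1)] gTB.hyps f(6) e cc by blast
    qed
  qed
qed

lemma R_item: "X \<in> Fs \<Longrightarrow> x \<in> Lx X \<Longrightarrow> x \<noteq> Hole \<Longrightarrow> Rs X x"
proof -
  assume X: "X \<in> Fs" and x: "x \<in> Lx X" and xn: "x \<noteq> Hole"
  obtain C e where Xe: "X = (C, e)" by (cases X)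
  from x Xe obtain c1 c2 where c: "x = subst c1 c2" "g C c1" "ctx c1" "Ee e c2" by (auto simp: Lx_def)
  have C: "wfg C" "ht C \<le> K" "holes C = 1" using X Xe c gen_holes[OF c(2)] by (auto simp: Fs_def TK_def ctx_def)
  have Q1: "c1 \<noteq> Hole \<Longrightarrow> Rs (C, None) c1" using Qlem[OF c(2) C(1,2)] C c by blast
  show "Rs X x"
  proof (cases e)
    case None
    then show ?thesis using Q1 c Xe xn by (simp add: Ee_def)
  next
    case (Some p)
    then obtain m \<alpha> where p: "e = Some (m, \<alpha>)" by (cases p) auto
    then have m: "m \<in> N0" "\<alpha> \<in> S0" using X Xe by (auto simp: Fs_def)
    have c2: "ctx c2" "g (NL m) (subst c2 (TL \<alpha>))" using c p by (auto simp: Ee_def)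
    have QF: "(C, None) \<in> Fs" using C by (auto simp: Fs_def TK_def)
    have WF: "(Hole, Some (m, \<alpha>)) \<in> Fs" using m by (auto simp: Fs_def TK_def)
    have sl: "subl (C, None) (Hole, Some (m, \<alpha>)) X" using subl_ext[of C "(Hole, Some (m, \<alpha>))"] Xe p by simp
    have pin: "c1 \<in> Lx (C, None)" using c by (simp add: Lx_None)
    have yin: "c2 \<in> Lx (Hole, Some (m, \<alpha>))" using c2 by (simp add: Lx_SomeHole)
    show ?thesis
    proof (rule R_split[OF QF WF sl pin yin c(1) xn])
      assume "c1 = Hole"
      then have "c2 \<noteq> Hole" using c xn by auto
      then show "Rs (Hole, Some (m, \<alpha>)) c2"
        using Qlem[OF c2(2)] m c2 by auto
    next
      assume "c2 = Hole" then show "Rs (C, None) c1" using Q1 c xn by auto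
    qed
  qed
qed


lemma finite_TKk: "finite {t. wfg t \<and> ht t \<le> k}"
proof (induction k)
  case 0
  have "{t. wfg t \<and> ht t \<le> 0} \<subseteq> {Hole} \<union> NL ` N0 \<union> TL ` S0"
  proof
    fix t assume "t \<in> {t. wfg t \<and> ht t \<le> 0}" then show "t \<in> {Hole} \<union> NL ` N0 \<union> TL ` S0" by (cases t) auto
  qed
  then show ?case using finN0 finS0 finite_subset by blast
next
  case (Suc k)
  let ?T = "{t. wfg t \<and> ht t \<le> k}"
  have "{t. wfg t \<and> ht t \<le> Suc k} \<subseteq> {Hole} \<union> NL ` N0 \<union> TL ` S0 \<union> (\<lambda>(n, t). NU n t) ` (N1 \<times> ?T)
        \<union> (\<lambda>(s, l, r). TB s l r) ` (S2 \<times> ?T \<times> ?T)"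
  proof
    fix t assume "t \<in> {t. wfg t \<and> ht t \<le> Suc k}"
    then show "t \<in> {Hole} \<union> NL ` N0 \<union> TL ` S0 \<union> (\<lambda>(n, t). NU n t) ` (N1 \<times> ?T) \<union> (\<lambda>(s, l, r). TB s l r) ` (S2 \<times> ?T \<times> ?T)"
      by (cases t) (auto simp: image_iff)
  qed
  moreover have "finite ({Hole} \<union> NL ` N0 \<union> TL ` S0 \<union> (\<lambda>(n, t). NU n t) ` (N1 \<times> ?T) \<union> (\<lambda>(s, l, r). TB s l r) ` (S2 \<times> ?T \<times> ?T))"
    using Suc finN0 finN1 finS0 finS2 by auto
  ultimately show ?case using finite_subset by blast
qed

lemma finite_TK: "finite TK"
  using finite_TKk[of K] by (simp add: TK_def)

lemma finite_Fs: "finite Fs"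
proof -
  have "Fs \<subseteq> TK \<times> (insert None (Some ` (N0 \<times> S0)))"
  proof clarify
    fix a b assume "(a, b) \<in> Fs"
    then show "a \<in> TK \<and> b \<in> insert None (Some ` (N0 \<times> S0))" by (cases b) (auto simp: Fs_def)
  qed
  then show ?thesis using finite_TK finN0 finS0 finite_subset by blast
qed

lemma finite_Hs: "finite Hs"
  using finite_TK by (simp add: Hs_def)

definition N0' :: "('n, 't) nt set" where "N0' = {Zx p s | p s. s \<in> Hs} \<union> {St}"
definition N1' :: "('n, 't) nt set" where "N1' = {Ux p X | p X. X \<in> Fs}"

definition Pch where "Pch = {(Ux p X, NU (Ux p Y) (NU (Ux p Zx') Hole)) | p X Y Zx'. X \<in> Fs \<and> Y \<in> Fs \<and> Zx' \<in> Fs \<and> subl Y Zx' X}"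
definition Pt1 where "Pt1 = {(Ux p X, TB \<sigma> Hole (NL (Zx (\<not> p) s))) | p X \<sigma> s. X \<in> Fs \<and> \<sigma> \<in> S2 \<and> d \<sigma> = 1 \<and> s \<in> Hs
     \<and> Lx (TB \<sigma> Hole s, None) \<subseteq> Lx X}"
definition Pt2 where "Pt2 = {(Ux p X, TB \<sigma> (NL (Zx (\<not> p) s)) Hole) | p X \<sigma> s. X \<in> Fs \<and> \<sigma> \<in> S2 \<and> d \<sigma> = 2 \<and> s \<in> Hs
     \<and> Lx (TB \<sigma> s Hole, None) \<subseteq> Lx X}"
definition Ps1 where "Ps1 = {(Zx p s, TL \<alpha>) | p s \<alpha>. s \<in> Hs \<and> \<alpha> \<in> S0 \<and> g s (TL \<alpha>)}"
definition Ps2 where "Ps2 = {(Zx p s, NU (Ux p X) (TL \<alpha>)) | p s X \<alpha>. s \<in> Hs \<and> X \<in> Fs \<and> \<alpha> \<in> S0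
     \<and> (\<forall>c \<in> Lx X. g s (subst c (TL \<alpha>)))}"
definition P0 where "P0 = Pch \<union> Pt1 \<union> Pt2 \<union> Ps1 \<union> Ps2"
definition P' where "P' = P0 \<union> {(St, r) | r. (Zx False (NL S), r) \<in> P0}"

definition G' :: "(('n, 't) nt, 't) scftg" where
  "G' = \<lparr>nts0 = N0', nts1 = N1', ts0 = S0, ts2 = S2, start = St, prods = P'\<rparr>"

lemma Ux_N1'[simp]: "Ux p X \<in> N1' \<longleftrightarrow> X \<in> Fs" unfolding N1'_def by blast
lemma Zx_N0'[simp]: "Zx p s \<in> N0' \<longleftrightarrow> s \<in> Hs" by (auto simp: N0'_def)
lemma St_N0'[simp]: "St \<in> N0'" by (auto simp: N0'_def)
lemma not_N'[simp]: "Ux p X \<notin> N0'" "Zx p s \<notin> N1'" "St \<notin> N1'" by (auto simp: N0'_def N1'_def)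

lemma NL_S_Hs: "NL S \<in> Hs" using S_in by (simp add: Hs_def TK_def)

lemma P0_cases:
  assumes "(n, r) \<in> P0"
  obtains (ch) p X Y Z' where "n = Ux p X" "r = NU (Ux p Y) (NU (Ux p Z') Hole)" "X \<in> Fs" "Y \<in> Fs" "Z' \<in> Fs" "subl Y Z' X"
  | (t1) p X \<sigma> s where "n = Ux p X" "r = TB \<sigma> Hole (NL (Zx (\<not> p) s))" "X \<in> Fs" "\<sigma> \<in> S2" "d \<sigma> = 1" "s \<in> Hs" "Lx (TB \<sigma> Hole s, None) \<subseteq> Lx X"
  | (t2) p X \<sigma> s where "n = Ux p X" "r = TB \<sigma> (NL (Zx (\<not> p) s)) Hole" "X \<in> Fs" "\<sigma> \<in> S2" "d \<sigma> = 2" "s \<in> Hs" "Lx (TB \<sigma> s Hole, None) \<subseteq> Lx X"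
  | (s1) p s \<alpha> where "n = Zx p s" "r = TL \<alpha>" "s \<in> Hs" "\<alpha> \<in> S0" "g s (TL \<alpha>)"
  | (s2) p s X \<alpha> where "n = Zx p s" "r = NU (Ux p X) (TL \<alpha>)" "s \<in> Hs" "X \<in> Fs" "\<alpha> \<in> S0"
        "\<forall>c \<in> Lx X. g s (subst c (TL \<alpha>))"
proof -
  from assms consider "(n, r) \<in> Pch" | "(n, r) \<in> Pt1" | "(n, r) \<in> Pt2" | "(n, r) \<in> Ps1" | "(n, r) \<in> Ps2"
    unfolding P0_def by blast
  then show thesis
  proof cases
    case 1 then show ?thesis unfolding Pch_def using ch by blast
  next
    case 2 then show ?thesis unfolding Pt1_def using t1 by blast
  next
    case 3 then show ?thesis unfolding Pt2_def using t2 by blast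
  next
    case 4 then show ?thesis unfolding Ps1_def using s1 by blast
  next
    case 5 then show ?thesis unfolding Ps2_def using s2 by blast
  qed
qed

lemma P'_cases:
  assumes "(n, r) \<in> P'"
  obtains (ch) p X Y Z' where "n = Ux p X" "r = NU (Ux p Y) (NU (Ux p Z') Hole)" "X \<in> Fs" "Y \<in> Fs" "Z' \<in> Fs" "subl Y Z' X"
  | (t1) p X \<sigma> s where "n = Ux p X" "r = TB \<sigma> Hole (NL (Zx (\<not> p) s))" "X \<in> Fs" "\<sigma> \<in> S2" "d \<sigma> = 1" "s \<in> Hs" "Lx (TB \<sigma> Hole s, None) \<subseteq> Lx X"
  | (t2) p X \<sigma> s where "n = Ux p X" "r = TB \<sigma> (NL (Zx (\<not> p) s)) Hole" "X \<in> Fs" "\<sigma> \<in> S2" "d \<sigma> = 2" "s \<in> Hs" "Lx (TB \<sigma> s Hole, None) \<subseteq> Lx X"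
  | (s1) p s \<alpha> where "n = Zx p s \<or> (n = St \<and> p = False \<and> s = NL S)" "r = TL \<alpha>" "s \<in> Hs" "\<alpha> \<in> S0" "g s (TL \<alpha>)"
  | (s2) p s X \<alpha> where "n = Zx p s \<or> (n = St \<and> p = False \<and> s = NL S)" "r = NU (Ux p X) (TL \<alpha>)" "s \<in> Hs" "X \<in> Fs" "\<alpha> \<in> S0"
        "\<forall>c \<in> Lx X. g s (subst c (TL \<alpha>))"
proof -
  from assms consider "(n, r) \<in> P0" | "n = St" "(Zx False (NL S), r) \<in> P0"
    unfolding P'_def by blast
  then show thesis
  proof cases
    case 1
    then show ?thesis
    proof (cases rule: P0_cases)
      case (ch p X Y Z') then show ?thesis using that(1) by blast
    next
      case (t1 p X \<sigma> s) then show ?thesis using that(2) by blast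
    next
      case (t2 p X \<sigma> s) then show ?thesis using that(3) by blast
    next
      case (s1 p s \<alpha>) then show ?thesis using that(4) by blast
    next
      case (s2 p s X \<alpha>) then show ?thesis using that(5) by blast
    qed
  next
    case 2
    from 2(2) show ?thesis
    proof (cases rule: P0_cases)
      case (s1 p s \<alpha>) then show ?thesis using that(4)[of False "NL S" \<alpha>] 2 by auto
    next
      case (s2 p s X \<alpha>) then show ?thesis using that(5)[of False "NL S" X \<alpha>] 2 by auto
    qed auto
  qed
qed

lemma N0'_N1'_disj: "N0' \<inter> N1' = {}"
  by (auto simp: N0'_def)

lemma P'_ok: "(n, r) \<in> P' \<Longrightarrow> wf_tree N0' N1' S0 S2 r \<and> ((n \<in> N0' \<and> holes r = 0) \<or> (n \<in> N1' \<and> holes r = 1))"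
  by (erule P'_cases) (auto simp: NL_S_Hs)

interpretation G2: gl N0' N1' P'
  by unfold_locales (use N0'_N1'_disj P'_ok in auto)

lemma finite_P': "finite P'"
proof -
  have "Pch \<subseteq> (\<lambda>(p, X, Y, Z'). (Ux p X, NU (Ux p Y) (NU (Ux p Z') Hole))) ` (UNIV \<times> Fs \<times> Fs \<times> Fs)"
  proof
    fix x assume "x \<in> Pch"
    then obtain p X Y Z' where "x = (Ux p X, NU (Ux p Y) (NU (Ux p Z') Hole))" "X \<in> Fs" "Y \<in> Fs" "Z' \<in> Fs"
      unfolding Pch_def by blast
    then show "x \<in> (\<lambda>(p, X, Y, Z'). (Ux p X, NU (Ux p Y) (NU (Ux p Z') Hole))) ` (UNIV \<times> Fs \<times> Fs \<times> Fs)"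
      by (intro image_eqI[where x="(p, X, Y, Z')"]) simp_all
  qed
  then have 1: "finite Pch" using finite_Fs finite_subset by fastforce
  have "Pt1 \<subseteq> (\<lambda>(p, X, \<sigma>, s). (Ux p X, TB \<sigma> Hole (NL (Zx (\<not> p) s)))) ` (UNIV \<times> Fs \<times> S2 \<times> Hs)"
  proof
    fix x assume "x \<in> Pt1"
    then obtain p X \<sigma> s where "x = (Ux p X, TB \<sigma> Hole (NL (Zx (\<not> p) s)))" "X \<in> Fs" "\<sigma> \<in> S2" "s \<in> Hs"
      unfolding Pt1_def by blast
    then show "x \<in> (\<lambda>(p, X, \<sigma>, s). (Ux p X, TB \<sigma> Hole (NL (Zx (\<not> p) s)))) ` (UNIV \<times> Fs \<times> S2 \<times> Hs)"
      by (intro image_eqI[where x="(p, X, \<sigma>, s)"]) simp_all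
  qed
  then have 2: "finite Pt1" using finite_Fs finite_Hs finS2 finite_subset by fastforce
  have "Pt2 \<subseteq> (\<lambda>(p, X, \<sigma>, s). (Ux p X, TB \<sigma> (NL (Zx (\<not> p) s)) Hole)) ` (UNIV \<times> Fs \<times> S2 \<times> Hs)"
  proof
    fix x assume "x \<in> Pt2"
    then obtain p X \<sigma> s where "x = (Ux p X, TB \<sigma> (NL (Zx (\<not> p) s)) Hole)" "X \<in> Fs" "\<sigma> \<in> S2" "s \<in> Hs"
      unfolding Pt2_def by blast
    then show "x \<in> (\<lambda>(p, X, \<sigma>, s). (Ux p X, TB \<sigma> (NL (Zx (\<not> p) s)) Hole)) ` (UNIV \<times> Fs \<times> S2 \<times> Hs)"
      by (intro image_eqI[where x="(p, X, \<sigma>, s)"]) simp_all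
  qed
  then have 3: "finite Pt2" using finite_Fs finite_Hs finS2 finite_subset by fastforce
  have "Ps1 \<subseteq> (\<lambda>(p, s, \<alpha>). (Zx p s, TL \<alpha>)) ` (UNIV \<times> Hs \<times> S0)"
  proof
    fix x assume "x \<in> Ps1"
    then obtain p s \<alpha> where "x = (Zx p s, TL \<alpha>)" "s \<in> Hs" "\<alpha> \<in> S0"
      unfolding Ps1_def by blast
    then show "x \<in> (\<lambda>(p, s, \<alpha>). (Zx p s, TL \<alpha>)) ` (UNIV \<times> Hs \<times> S0)"
      by (intro image_eqI[where x="(p, s, \<alpha>)"]) simp_all
  qed
  then have 4: "finite Ps1" using finite_Hs finS0 finite_subset by fastforce
  have "Ps2 \<subseteq> (\<lambda>(p, s, X, \<alpha>). (Zx p s, NU (Ux p X) (TL \<alpha>))) ` (UNIV \<times> Hs \<times> Fs \<times> S0)"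
  proof
    fix x assume "x \<in> Ps2"
    then obtain p s X \<alpha> where "x = (Zx p s, NU (Ux p X) (TL \<alpha>))" "s \<in> Hs" "X \<in> Fs" "\<alpha> \<in> S0"
      unfolding Ps2_def by blast
    then show "x \<in> (\<lambda>(p, s, X, \<alpha>). (Zx p s, NU (Ux p X) (TL \<alpha>))) ` (UNIV \<times> Hs \<times> Fs \<times> S0)"
      by (intro image_eqI[where x="(p, s, X, \<alpha>)"]) simp_all
  qed
  then have 5: "finite Ps2" using finite_Fs finite_Hs finS0 finite_subset by fastforce
  have P0: "finite P0" using 1 2 3 4 5 by (simp add: P0_def)
  have "{(St, r) | r. (Zx False (NL S), r) \<in> P0} \<subseteq> (\<lambda>x. (St, snd x)) ` P0"
  proof
    fix x assume "x \<in> {(St, r) | r. (Zx False (NL S), r) \<in> P0}"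
    then obtain r where "x = (St, r)" "(Zx False (NL S), r) \<in> P0" by blast
    then show "x \<in> (\<lambda>x. (St, snd x)) ` P0" by (intro image_eqI[where x="(Zx False (NL S), r)"]) simp_all
  qed
  then have "finite {(St, r) | r. (Zx False (NL S), r) \<in> P0}" using P0 finite_subset by blast
  then show ?thesis using P0 unfolding P'_def by blast
qed

lemma G'_sCFTG: "sCFTG G'"
proof -
  have "finite N0'"
  proof -
    have "N0' \<subseteq> insert St ((\<lambda>(p, s). Zx p s) ` (UNIV \<times> Hs))" by (auto simp: N0'_def)
    then show ?thesis using finite_Hs finite_subset by fastforce
  qed
  moreover have "finite N1'"
  proof -
    have "N1' \<subseteq> (\<lambda>(p, X). Ux p X) ` (UNIV \<times> Fs)" by (auto simp: N1'_def)
    then show ?thesis using finite_Fs finite_subset by fastforce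
  qed
  moreover have "\<forall>(n, r) \<in> P'. wf_tree N0' N1' S0 S2 r \<and> ((n \<in> N0' \<and> holes r = 0) \<or> (n \<in> N1' \<and> holes r = 1))"
    using P'_ok by blast
  ultimately show ?thesis
    unfolding sCFTG_def G'_def using finS0 finS2 disjS N0'_N1'_disj finite_P' by simp
qed

lemma G'_spine1: "(n, C) \<in> P' \<Longrightarrow> n \<in> N1' \<Longrightarrow> spine_ok d C"
  by (erule P'_cases) auto

lemma G'_spine: "\<forall>(n, C) \<in> P'. n \<in> N1' \<longrightarrow> spine_ok d C"
  using G'_spine1 by blast

lemma G'_normal1: "(n, r) \<in> P' \<Longrightarrow> (n \<in> N0' \<and> ((\<exists>b\<in>N1'. \<exists>\<alpha>\<in>S0. r = NU b (TL \<alpha>)) \<or> (\<exists>\<alpha>\<in>S0. r = TL \<alpha>))) \<or>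
          (n \<in> N1' \<and> (\<exists>b1\<in>N1'. \<exists>b2\<in>N1'. r = NU b1 (NU b2 Hole))) \<or>
          (n \<in> N1' \<and> (\<exists>\<sigma>\<in>S2. \<exists>a\<in>N0' - {St}. r = TB \<sigma> Hole (NL a) \<or> r = TB \<sigma> (NL a) Hole))"
proof (erule P'_cases)
  fix p X Y Z' assume "n = Ux p X" "r = NU (Ux p Y) (NU (Ux p Z') Hole)" "X \<in> Fs" "Y \<in> Fs" "Z' \<in> Fs"
  then show ?thesis by auto
next
  fix p X \<sigma> s assume "n = Ux p X" "r = TB \<sigma> Hole (NL (Zx (\<not> p) s))" "X \<in> Fs" "\<sigma> \<in> S2" "s \<in> Hs"
  then show ?thesis by auto
next
  fix p X \<sigma> s assume "n = Ux p X" "r = TB \<sigma> (NL (Zx (\<not> p) s)) Hole" "X \<in> Fs" "\<sigma> \<in> S2" "s \<in> Hs"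
  then show ?thesis by auto
next
  fix p s \<alpha> assume "n = Zx p s \<or> (n = St \<and> p = False \<and> s = NL S)" "r = TL \<alpha>" "s \<in> Hs" "\<alpha> \<in> S0"
  then show ?thesis using NL_S_Hs by auto
next
  fix p s X \<alpha> assume "n = Zx p s \<or> (n = St \<and> p = False \<and> s = NL S)" "r = NU (Ux p X) (TL \<alpha>)" "s \<in> Hs" "X \<in> Fs" "\<alpha> \<in> S0"
  then show ?thesis by auto
qed

lemma G'_normal: "normal_form G'"
  unfolding normal_form_def G'_def scftg.simps using G'_normal1 by blast


lemma PchI: "X \<in> Fs \<Longrightarrow> Y \<in> Fs \<Longrightarrow> Z' \<in> Fs \<Longrightarrow> subl Y Z' X \<Longrightarrow> (Ux p X, NU (Ux p Y) (NU (Ux p Z') Hole)) \<in> P'"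
  by (simp add: P'_def P0_def) (unfold Pch_def, blast)
lemma Pt1I: assumes "X \<in> Fs" "\<sigma> \<in> S2" "d \<sigma> = 1" "s \<in> Hs" "Lx (TB \<sigma> Hole s, None) \<subseteq> Lx X"
  shows "(Ux p X, TB \<sigma> Hole (NL (Zx (\<not> p) s))) \<in> P'"
proof -
  have "(Ux p X, TB \<sigma> Hole (NL (Zx (\<not> p) s))) \<in> Pt1" unfolding Pt1_def
    by (rule CollectI, rule exI[of _ p], rule exI[of _ X], rule exI[of _ \<sigma>], rule exI[of _ s]) (use assms in simp)
  then show ?thesis unfolding P'_def P0_def by blast
qed
lemma Pt2I: assumes "X \<in> Fs" "\<sigma> \<in> S2" "d \<sigma> = 2" "s \<in> Hs" "Lx (TB \<sigma> s Hole, None) \<subseteq> Lx X"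
  shows "(Ux p X, TB \<sigma> (NL (Zx (\<not> p) s)) Hole) \<in> P'"
proof -
  have "(Ux p X, TB \<sigma> (NL (Zx (\<not> p) s)) Hole) \<in> Pt2" unfolding Pt2_def
    by (rule CollectI, rule exI[of _ p], rule exI[of _ X], rule exI[of _ \<sigma>], rule exI[of _ s]) (use assms in simp)
  then show ?thesis unfolding P'_def P0_def by blast
qed
lemma Ps1I: assumes "s \<in> Hs" "\<alpha> \<in> S0" "g s (TL \<alpha>)" shows "(Zx p s, TL \<alpha>) \<in> P'"
proof -
  have "(Zx p s, TL \<alpha>) \<in> Ps1" unfolding Ps1_def
    by (rule CollectI, rule exI[of _ p], rule exI[of _ s], rule exI[of _ \<alpha>]) (use assms in simp)
  then show ?thesis unfolding P'_def P0_def by blast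
qed
lemma Ps2I: assumes "s \<in> Hs" "X \<in> Fs" "\<alpha> \<in> S0" "\<forall>c \<in> Lx X. g s (subst c (TL \<alpha>))"
  shows "(Zx p s, NU (Ux p X) (TL \<alpha>)) \<in> P'"
proof -
  have "(Zx p s, NU (Ux p X) (TL \<alpha>)) \<in> Ps2" unfolding Ps2_def
    by (rule CollectI, rule exI[of _ p], rule exI[of _ s], rule exI[of _ X], rule exI[of _ \<alpha>]) (use assms in simp)
  then show ?thesis unfolding P'_def P0_def by blast
qed

definition semN :: "('n, 't) nt \<Rightarrow> ('n, 't) tr \<Rightarrow> bool" where
  "semN n v = (case n of Zx p s \<Rightarrow> g s v | St \<Rightarrow> g (NL S) v | Ux p X \<Rightarrow> False)"
definition semU :: "('n, 't) nt \<Rightarrow> ('n, 't) tr \<Rightarrow> bool" where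
  "semU n c = (case n of Ux p X \<Rightarrow> c \<in> Lx X \<and> c \<noteq> Hole | _ \<Rightarrow> False)"

fun sem :: "(('n, 't) nt, 't) tr \<Rightarrow> ('n, 't) tr \<Rightarrow> bool" where
  "sem Hole v = (v = Hole)"
| "sem (TL a) v = (v = TL a)"
| "sem (NL n) v = semN n v"
| "sem (NU n t) v = (\<exists>c w. semU n c \<and> sem t w \<and> v = subst c w)"
| "sem (TB \<sigma> l r) v = (\<exists>l' r'. v = TB \<sigma> l' r' \<and> sem l l' \<and> sem r r')"

lemma semN_P: "(n, r) \<in> P' \<Longrightarrow> n \<in> N0' \<Longrightarrow> sem r x \<Longrightarrow> semN n x"
proof (erule P'_cases)
  fix p s \<alpha> assume "n = Zx p s \<or> (n = St \<and> p = False \<and> s = NL S)" "r = TL \<alpha>" "g s (TL \<alpha>)" "sem r x"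
  then show "semN n x" by (auto simp: semN_def)
next
  fix p s X \<alpha> assume a: "n = Zx p s \<or> (n = St \<and> p = False \<and> s = NL S)" "r = NU (Ux p X) (TL \<alpha>)"
    "\<forall>c \<in> Lx X. g s (subst c (TL \<alpha>))" "sem r x"
  then obtain c where "c \<in> Lx X" "x = subst c (TL \<alpha>)" by (auto simp: semU_def)
  then show "semN n x" using a by (auto simp: semN_def)
qed auto

lemma semU_P: "(n, C) \<in> P' \<Longrightarrow> n \<in> N1' \<Longrightarrow> sem C x \<Longrightarrow> semU n x"
proof (erule P'_cases)
  fix p X Y Z' assume a: "n = Ux p X" "C = NU (Ux p Y) (NU (Ux p Z') Hole)" "subl Y Z' X" "sem C x"
  then obtain c1 c2 where "c1 \<in> Lx Y" "c1 \<noteq> Hole" "c2 \<in> Lx Z'" "x = subst c1 c2"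
    by (auto simp: semU_def)
  then show "semU n x" using a by (auto simp: semU_def subl_def subst_Hole_iff)
next
  fix p X \<sigma> s assume a: "n = Ux p X" "C = TB \<sigma> Hole (NL (Zx (\<not> p) s))" "d \<sigma> = 1" "s \<in> Hs"
    "Lx (TB \<sigma> Hole s, None) \<subseteq> Lx X" "sem C x"
  then obtain u where u: "x = TB \<sigma> Hole u" "g s u" by (auto simp: semN_def)
  then have "holes u = 0" "trm u" using gen_holes gen_trm a(4) by (auto simp: Hs_def)
  then have "x \<in> Lx (TB \<sigma> Hole s, None)" using u a(3) by (auto simp: Lx_None ctx_TB intro: gen.intros)
  then show "semU n x" using a u by (auto simp: semU_def)
next
  fix p X \<sigma> s assume a: "n = Ux p X" "C = TB \<sigma> (NL (Zx (\<not> p) s)) Hole" "d \<sigma> = 2" "s \<in> Hs"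
    "Lx (TB \<sigma> s Hole, None) \<subseteq> Lx X" "sem C x"
  then obtain u where u: "x = TB \<sigma> u Hole" "g s u" by (auto simp: semN_def)
  then have "holes u = 0" "trm u" using gen_holes gen_trm a(4) by (auto simp: Hs_def)
  then have "x \<in> Lx (TB \<sigma> s Hole, None)" using u a(3) by (auto simp: Lx_None ctx_TB intro: gen.intros)
  then show "semU n x" using a u by (auto simp: semU_def)
qed auto

lemma sound: "G2.g t v \<Longrightarrow> sem t (conv v)"
proof (induction rule: gen.induct)
  case (gNL n r v)
  then show ?case using semN_P by auto
next
  case (gNU n C c t w)
  have "trm c" using G2.gen_trm gNU.hyps(3) by blast
  then show ?case using gNU semU_P by (auto simp: conv_subst)
qed auto

lemma wt_pos: "t \<noteq> Hole \<Longrightarrow> 0 < wt t"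
  by (cases t) auto

lemma complete: "wt v = k \<Longrightarrow> (\<forall>p s. s \<in> Hs \<longrightarrow> g s v \<longrightarrow> G2.g (NL (Zx p s)) (conv v)) \<and>
   (\<forall>p X. X \<in> Fs \<longrightarrow> v \<in> Lx X \<longrightarrow> v \<noteq> Hole \<longrightarrow> (\<exists>C. (Ux p X, C) \<in> P' \<and> G2.g C (conv v)))"
proof (induction k arbitrary: v rule: less_induct)
  case (less k)
  show ?case
  proof (intro conjI allI impI)
    fix p s assume s: "s \<in> Hs" "g s v"
    have sf: "holes s = 0" "wfg s" using s by (auto simp: Hs_def TK_def)
    have hv: "holes v = 0" "trm v" "wfg v" using gen_holes gen_trm gen_wf s(2) sf by auto
    then obtain c \<alpha> where c: "v = subst c (TL \<alpha>)" "ctx c" using dsplit by blast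
    have \<alpha>: "\<alpha> \<in> S0" using wf_subst_D[of N0 N1 S0 S2 c "TL \<alpha>"] hv c by (simp add: ctx_def)
    show "G2.g (NL (Zx p s)) (conv v)"
    proof (cases "c = Hole")
      case True
      then show ?thesis using c s \<alpha> Ps1I[OF s(1) \<alpha>, where p=p] by (auto intro: gen.intros)
    next
      case False
      let ?X = "cut_it s \<alpha>"
      have XF: "?X \<in> Fs" using cut_Fs s \<alpha> by (auto simp: Hs_def)
      have cin: "c \<in> Lx ?X" using D sf s c by auto
      have P2: "(Zx p s, NU (Ux p ?X) (TL \<alpha>)) \<in> P'" using Ps2I[OF s(1) XF \<alpha>] D' sf by blast
      have "wt c < k" using wt_subst[of c "TL \<alpha>"] c less.prems by (simp add: ctx_def)
      then obtain C where C: "(Ux p ?X, C) \<in> P'" "G2.g C (conv c)" using less.IH[OF \<open>wt c < k\<close> refl] cin XF False by blast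
      have "G2.g (NU (Ux p ?X) (TL \<alpha>)) (subst (conv c) (TL \<alpha>))"
        using gen.gNU[OF C(1) _ C(2) gen.gTL] XF by simp
      moreover have "conv v = subst (conv c) (TL \<alpha>)" using c conv_subst[of c "TL \<alpha>"] by (simp add: ctx_def)
      moreover have "Zx p s \<in> N0'" using s by simp
      ultimately show ?thesis using gen.gNL[OF P2] by metis
    qed
  next
    fix p X assume X: "X \<in> Fs" "v \<in> Lx X" "v \<noteq> Hole"
    have "Rs X v" using R_item X by blast
    then consider (sp) Y Z' c1 c2 where "Y \<in> Fs" "Z' \<in> Fs" "subl Y Z' X" "v = subst c1 c2" "c1 \<in> Lx Y" "c2 \<in> Lx Z'"
        "c1 \<noteq> Hole" "c2 \<noteq> Hole"
      | (l1) \<sigma> s u where "s \<in> Hs" "\<sigma> \<in> S2" "g s u" "d \<sigma> = 1" "v = TB \<sigma> Hole u" "Lx (TB \<sigma> Hole s, None) \<subseteq> Lx X"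
      | (l2) \<sigma> s u where "s \<in> Hs" "\<sigma> \<in> S2" "g s u" "d \<sigma> = 2" "v = TB \<sigma> u Hole" "Lx (TB \<sigma> s Hole, None) \<subseteq> Lx X"
      unfolding Rs_def by blast
    then show "\<exists>C. (Ux p X, C) \<in> P' \<and> G2.g C (conv v)"
    proof cases
      case sp
      have cc: "ctx c1" "ctx c2" using sp Lx_ctx by auto
      have "wt v = wt c1 + wt c2" using wt_subst[of c1 c2] cc sp by (simp add: ctx_def)
      then have "wt c1 < k" "wt c2 < k" using wt_pos sp less.prems by fastforce+
      have "\<exists>C1. (Ux p Y, C1) \<in> P' \<and> G2.g C1 (conv c1)" using less.IH[OF \<open>wt c1 < k\<close> refl] sp by blast
      moreover have "\<exists>C2. (Ux p Z', C2) \<in> P' \<and> G2.g C2 (conv c2)" using less.IH[OF \<open>wt c2 < k\<close> refl] sp by blast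
      ultimately obtain C1 C2 where C: "(Ux p Y, C1) \<in> P'" "G2.g C1 (conv c1)" "(Ux p Z', C2) \<in> P'" "G2.g C2 (conv c2)"
        by blast
      have "G2.g (NU (Ux p Z') Hole) (conv c2)" using gen.gNU[OF C(3) _ C(4) gen.gHole] sp by simp
      then have "G2.g (NU (Ux p Y) (NU (Ux p Z') Hole)) (subst (conv c1) (conv c2))"
        using gen.gNU[OF C(1) _ C(2)] sp by simp
      moreover have "conv v = subst (conv c1) (conv c2)" using sp cc conv_subst[of c1 c2] by (simp add: ctx_def)
      ultimately show ?thesis using PchI[OF X(1) sp(1,2,3), of p] by metis
    next
      case l1
      have "wt u < k" using l1 less.prems by simp
      then have "G2.g (NL (Zx (\<not> p) s)) (conv u)" using less.IH[OF \<open>wt u < k\<close> refl] l1 by blast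
      then have "G2.g (TB \<sigma> Hole (NL (Zx (\<not> p) s))) (conv v)" using l1 by (auto intro: gen.intros)
      then show ?thesis using Pt1I[OF X(1) l1(2,4,1,6), where p=p] by blast
    next
      case l2
      have "wt u < k" using l2 less.prems by simp
      then have "G2.g (NL (Zx (\<not> p) s)) (conv u)" using less.IH[OF \<open>wt u < k\<close> refl] l2 by blast
      then have "G2.g (TB \<sigma> (NL (Zx (\<not> p) s)) Hole) (conv v)" using l2 by (auto intro: gen.intros)
      then show ?thesis using Pt2I[OF X(1) l2(2,4,1,6), where p=p] by blast
    qed
  qed
qed

lemma St_prods: "(St, r) \<in> P' \<longleftrightarrow> (Zx False (NL S), r) \<in> P'"
proof
  assume "(St, r) \<in> P'"
  moreover have "(St, r) \<notin> P0" by (auto elim: P0_cases)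
  ultimately show "(Zx False (NL S), r) \<in> P'" unfolding P'_def by blast
next
  assume "(Zx False (NL S), r) \<in> P'"
  then have "(Zx False (NL S), r) \<in> P0" unfolding P'_def by blast
  then show "(St, r) \<in> P'" unfolding P'_def by blast
qed

lemma gSt: "G2.g (NL St) v \<longleftrightarrow> G2.g (NL (Zx False (NL S))) v"
  using St_prods NL_S_Hs by (auto elim!: genNLE intro: gen.intros)

lemma lang_G': "lang G' = {u. ttree_over S0 S2 u \<and> (step N0 N1 P)\<^sup>*\<^sup>* (NL S) (embed u)}"
proof -
  have "(step N0' N1' P')\<^sup>*\<^sup>* (NL St) (embed u) \<longleftrightarrow> (step N0 N1 P)\<^sup>*\<^sup>* (NL S) (embed u)" for u
  proof -
    have "(step N0' N1' P')\<^sup>*\<^sup>* (NL St) (embed u) \<longleftrightarrow> G2.g (NL (Zx False (NL S))) (embed u)"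
      using G2.steps_iff_gen[OF embed_trm] gSt by blast
    also have "\<dots> \<longleftrightarrow> g (NL S) (embed u)"
    proof
      assume "G2.g (NL (Zx False (NL S))) (embed u)"
      then show "g (NL S) (embed u)" using sound[of "NL (Zx False (NL S))" "embed u"] by (simp add: semN_def)
    next
      assume "g (NL S) (embed u)"
      then show "G2.g (NL (Zx False (NL S))) (embed u)" using complete[OF refl, of "embed u"] NL_S_Hs by simp
    qed
    also have "\<dots> \<longleftrightarrow> (step N0 N1 P)\<^sup>*\<^sup>* (NL S) (embed u)" using steps_iff_gen[OF embed_trm] by blast
    finally show ?thesis .
  qed
  then show ?thesis unfolding lang_def G'_def by simp
qed

fun good :: "bool \<Rightarrow> (('n, 't) nt, 't) tr \<Rightarrow> bool" where
  "good q Hole = True"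
| "good q (NL n) = (\<exists>s. n = Zx (\<not> q) s)"
| "good q (TL a) = True"
| "good q (NU n t) = ((\<exists>X. n = Ux q X) \<and> good q t)"
| "good q (TB \<sigma> l r) = (good q l \<and> good q r)"

lemma good_subst: "good q C \<Longrightarrow> good q t \<Longrightarrow> good q (subst C t)"
  by (induction C) auto

lemma good_step: "step N0' N1' {p \<in> P'. fst p \<in> N1'} t t' \<Longrightarrow> good q t \<Longrightarrow> good q t'"
proof (induction rule: step.induct)
  case (rule0 n r)
  then show ?case using N0'_N1'_disj by auto
next
  case (rule1 n C t)
  then obtain X where n: "n = Ux q X" and gt: "good q t" by auto
  from rule1.hyps(1) have "(n, C) \<in> P'" by simp
  then have "good q C" by (cases rule: P'_cases) (use n in auto)
  then show ?case using good_subst gt by blast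
qed auto

lemma good_steps: "(step N0' N1' {p \<in> P'. fst p \<in> N1'})\<^sup>*\<^sup>* t t' \<Longrightarrow> good q t \<Longrightarrow> good q t'"
  by (induction rule: rtranclp_induct) (auto intro: good_step)

lemma good_nts0: "good q t \<Longrightarrow> n \<in> nts0_of t \<Longrightarrow> \<exists>s. n = Zx (\<not> q) s"
  by (induction t) auto

lemma G'_normalized: "normalized G'"
  unfolding normalized_def
proof (intro conjI G'_normal ballI)
  fix n t assume n: "n \<in> nts0 G'" and t: "t \<in> spinal G' n"
  from t obtain t1 where t1: "step N0' N1' P' (NL n) t1" "(step N0' N1' {p \<in> P'. fst p \<in> N1'})\<^sup>*\<^sup>* t1 t"
    unfolding spinal_def G'_def by auto
  from t1(1) have pr: "(n, t1) \<in> P'" "n \<in> N0'" by (auto elim: stepNLE)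
  define q where "q = (case n of Zx p s \<Rightarrow> p | _ \<Rightarrow> False)"
  have "good q t1" using pr(1)
  proof (cases rule: P'_cases)
    case (s2 p s X \<alpha>) then show ?thesis by (auto simp: q_def)
  qed (use pr(2) in auto)
  then have "good q t" using good_steps t1(2) by blast
  moreover have "\<not> (\<exists>s. n = Zx (\<not> q) s)" by (cases n) (auto simp: q_def)
  ultimately show "n \<notin> nts0_of t" using good_nts0 by blast
qed

end

section \<open>Renaming\<close>

fun mapn :: "('a \<Rightarrow> 'b) \<Rightarrow> ('a, 't) tr \<Rightarrow> ('b, 't) tr" where
  "mapn f Hole = Hole"
| "mapn f (NL n) = NL (f n)"
| "mapn f (TL a) = TL a"
| "mapn f (NU n t) = NU (f n) (mapn f t)"
| "mapn f (TB s l r) = TB s (mapn f l) (mapn f r)"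

definition rnP :: "('a \<Rightarrow> 'b) \<Rightarrow> ('a \<times> ('a, 't) tr) set \<Rightarrow> ('b \<times> ('b, 't) tr) set" where
  "rnP f P = (\<lambda>(n, r). (f n, mapn f r)) ` P"

definition rn :: "('a \<Rightarrow> 'b) \<Rightarrow> ('a, 't) scftg \<Rightarrow> ('b, 't) scftg" where
  "rn f G = \<lparr>nts0 = f ` nts0 G, nts1 = f ` nts1 G, ts0 = ts0 G, ts2 = ts2 G, start = f (start G),
     prods = rnP f (prods G)\<rparr>"

lemma map_subst: "mapn f (subst C t) = subst (mapn f C) (mapn f t)"
  by (induction C) auto

lemma holes_map[simp]: "holes (mapn f t) = holes t"
  by (induction t) auto

lemma spine_map[simp]: "spine_ok d (mapn f t) = spine_ok d t"
  by (induction t) auto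

lemma wf_map: "wf_tree N0 N1 S0 S2 t \<Longrightarrow> wf_tree (f ` N0) (f ` N1) S0 S2 (mapn f t)"
  by (induction t) auto

lemma no_unary_map[simp]: "no_unary (mapn f t) = no_unary t"
  by (induction t) auto

lemma nts0_of_map[simp]: "nts0_of (mapn f t) = f ` nts0_of t"
  by (induction t) auto

lemma map_embed[simp]: "mapn f (embed u) = embed u"
  by (induction u) auto

lemma map_map_id: "wf_tree N0 N1 S0 S2 r \<Longrightarrow> (\<forall>x \<in> N0 \<union> N1. h (f x) = x) \<Longrightarrow> mapn h (mapn f r) = r"
  by (induction r) auto

lemma step_map: "step N0 N1 P t t' \<Longrightarrow> step (f ` N0) (f ` N1) (rnP f P) (mapn f t) (mapn f t')"
proof (induction rule: step.induct)
  case (rule0 n r)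
  then have "(f n, mapn f r) \<in> rnP f P" by (force simp: rnP_def)
  then show ?case using rule0 by (auto intro: step.intros)
next
  case (rule1 n C t)
  then have "(f n, mapn f C) \<in> rnP f P" by (force simp: rnP_def)
  then show ?case using rule1 by (auto intro: step.intros simp: map_subst)
qed (auto intro: step.intros)

lemma steps_map: "(step N0 N1 P)\<^sup>*\<^sup>* t t' \<Longrightarrow> (step (f ` N0) (f ` N1) (rnP f P))\<^sup>*\<^sup>* (mapn f t) (mapn f t')"
  by (induction rule: rtranclp_induct) (auto intro: rtranclp.rtrancl_into_rtrancl step_map)

lemma step_mono: "step N0 N1 P t t' \<Longrightarrow> N0 \<subseteq> M0 \<Longrightarrow> N1 \<subseteq> M1 \<Longrightarrow> P \<subseteq> Q \<Longrightarrow> step M0 M1 Q t t'"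
  by (induction rule: step.induct) (auto intro: step.intros)

lemma steps_mono: "(step N0 N1 P)\<^sup>*\<^sup>* t t' \<Longrightarrow> N0 \<subseteq> M0 \<Longrightarrow> N1 \<subseteq> M1 \<Longrightarrow> P \<subseteq> Q \<Longrightarrow> (step M0 M1 Q)\<^sup>*\<^sup>* t t'"
  by (induction rule: rtranclp_induct) (auto intro: rtranclp.rtrancl_into_rtrancl step_mono)

lemma rename_ok:
  fixes G :: "('a, 't) scftg" and f :: "'a \<Rightarrow> 'b"
  assumes sg: "spine_grammar G" and nz: "normalized G" and inj: "inj_on f (nts0 G \<union> nts1 G)"
  shows "spine_grammar (rn f G) \<and> normalized (rn f G) \<and> lang (rn f G) = lang G"
proof -
  let ?NN0 = "nts0 G" and ?NN1 = "nts1 G" and ?P = "prods G" and ?TT0 = "ts0 G" and ?TT2 = "ts2 G" and ?St = "start G"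
  define h where "h = inv_into (?NN0 \<union> ?NN1) f"
  have hf: "x \<in> ?NN0 \<union> ?NN1 \<Longrightarrow> h (f x) = x" for x using inj by (simp add: h_def)
  have sc: "sCFTG G" using sg by (simp add: spine_grammar_def)
  have pG: "(n, r) \<in> ?P \<Longrightarrow> wf_tree ?NN0 ?NN1 ?TT0 ?TT2 r \<and> ((n \<in> ?NN0 \<and> holes r = 0) \<or> (n \<in> ?NN1 \<and> holes r = 1))" for n r
    using sc by (auto simp: sCFTG_def)
  have disj: "?NN0 \<inter> ?NN1 = {}" using sc by (simp add: sCFTG_def)
  have SN: "?St \<in> ?NN0" using sc by (simp add: sCFTG_def)
  have injD: "x \<in> ?NN0 \<union> ?NN1 \<Longrightarrow> y \<in> ?NN0 \<union> ?NN1 \<Longrightarrow> f x = f y \<Longrightarrow> x = y" for x y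
    using inj by (meson inj_onD)
  have mm: "(n, r) \<in> ?P \<Longrightarrow> mapn h (mapn f r) = r" for n r
    using pG map_map_id hf by blast
  have "f ` ?NN0 \<inter> f ` ?NN1 = f ` (?NN0 \<inter> ?NN1)" using inj by (simp add: inj_on_image_Int)
  then have disj': "f ` ?NN0 \<inter> f ` ?NN1 = {}" using disj by simp
  have pG': "\<forall>(n', r') \<in> rnP f ?P. wf_tree (f ` ?NN0) (f ` ?NN1) ?TT0 ?TT2 r' \<and>
      ((n' \<in> f ` ?NN0 \<and> holes r' = 0) \<or> (n' \<in> f ` ?NN1 \<and> holes r' = 1))"
  proof clarify
    fix n' r' assume "(n', r') \<in> rnP f ?P"
    then obtain n r where nr: "(n, r) \<in> ?P" "n' = f n" "r' = mapn f r" by (auto simp: rnP_def)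
    then show "wf_tree (f ` ?NN0) (f ` ?NN1) ?TT0 ?TT2 r' \<and> ((n' \<in> f ` ?NN0 \<and> holes r' = 0) \<or> (n' \<in> f ` ?NN1 \<and> holes r' = 1))"
      using pG[OF nr(1)] wf_map[of ?NN0 ?NN1 ?TT0 ?TT2 r f] by auto
  qed
  have "finite (rnP f ?P)" using sc by (simp add: rnP_def sCFTG_def)
  then have sc': "sCFTG (rn f G)"
    using sc disj' pG' SN unfolding sCFTG_def rn_def by simp
  obtain d where d: "\<forall>\<sigma> \<in> ?TT2. d \<sigma> \<in> {1, 2}" "\<forall>(n, C) \<in> ?P. n \<in> ?NN1 \<longrightarrow> spine_ok d C"
    using sg by (auto simp: spine_grammar_def)
  have "spine_ok d C'" if a: "(n', C') \<in> rnP f ?P" "n' \<in> f ` ?NN1" for n' C'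
  proof -
    from a obtain n C where nC: "(n, C) \<in> ?P" "n' = f n" "C' = mapn f C" by (auto simp: rnP_def)
    obtain m where m: "m \<in> ?NN1" "n' = f m" using a by auto
    have "n \<in> ?NN0 \<union> ?NN1" using pG nC by blast
    then have "n = m" using injD m nC by blast
    then show "spine_ok d C'" using d nC m by auto
  qed
  then have "\<forall>(n, C) \<in> rnP f ?P. n \<in> f ` ?NN1 \<longrightarrow> spine_ok d C" by blast
  then have sg': "spine_grammar (rn f G)"
    using sc' d unfolding spine_grammar_def by (auto simp: rn_def)
  have fa: "f a \<in> f ` ?NN0 - {f ?St}" if a: "a \<in> ?NN0 - {?St}" for a
  proof -
    have "f a \<noteq> f ?St"
    proof
      assume "f a = f ?St"
      then have "a = ?St" using injD[of a ?St] a SN by blast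
      with a show False by blast
    qed
    then show ?thesis using a by blast
  qed
  have nf1: "(n' \<in> f ` ?NN0 \<and> ((\<exists>b\<in>f ` ?NN1. \<exists>\<alpha>\<in>?TT0. r' = NU b (TL \<alpha>)) \<or> (\<exists>\<alpha>\<in>?TT0. r' = TL \<alpha>))) \<or>
         (n' \<in> f ` ?NN1 \<and> (\<exists>b1\<in>f ` ?NN1. \<exists>b2\<in>f ` ?NN1. r' = NU b1 (NU b2 Hole))) \<or>
         (n' \<in> f ` ?NN1 \<and>
          (\<exists>\<sigma>\<in>?TT2. \<exists>a\<in>f ` ?NN0 - {f ?St}. r' = TB \<sigma> Hole (NL a) \<or> r' = TB \<sigma> (NL a) Hole))"
    if nr: "(n, r) \<in> ?P" "n' = f n" "r' = mapn f r" for n r n' r'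
  proof -
    have "(n \<in> ?NN0 \<and> ((\<exists>b \<in> ?NN1. \<exists>\<alpha> \<in> ?TT0. r = NU b (TL \<alpha>)) \<or> (\<exists>\<alpha> \<in> ?TT0. r = TL \<alpha>)))
      \<or> (n \<in> ?NN1 \<and> (\<exists>b1 \<in> ?NN1. \<exists>b2 \<in> ?NN1. r = NU b1 (NU b2 Hole)))
      \<or> (n \<in> ?NN1 \<and> (\<exists>\<sigma> \<in> ?TT2. \<exists>a \<in> ?NN0 - {?St}. r = TB \<sigma> Hole (NL a) \<or> r = TB \<sigma> (NL a) Hole))"
      using nz nr(1) unfolding normalized_def normal_form_def by (simp add: Ball_def)
    then show ?thesis
    proof (elim disjE conjE bexE)
      fix b \<alpha> assume "n \<in> ?NN0" "b \<in> ?NN1" "\<alpha> \<in> ?TT0" "r = NU b (TL \<alpha>)"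
      then show ?thesis using nr by simp
    next
      fix \<alpha> assume "n \<in> ?NN0" "\<alpha> \<in> ?TT0" "r = TL \<alpha>"
      then show ?thesis using nr by simp
    next
      fix b1 b2 assume "n \<in> ?NN1" "b1 \<in> ?NN1" "b2 \<in> ?NN1" "r = NU b1 (NU b2 Hole)"
      then show ?thesis using nr by simp
    next
      fix \<sigma> a assume d: "n \<in> ?NN1" "\<sigma> \<in> ?TT2" "a \<in> ?NN0 - {?St}" "r = TB \<sigma> Hole (NL a)"
      have "n' \<in> f ` ?NN1" using d nr by blast
      moreover have "r' = TB \<sigma> Hole (NL (f a))" using d nr by simp
      ultimately show ?thesis using fa[OF d(3)] d(2) by blast
    next
      fix \<sigma> a assume d: "n \<in> ?NN1" "\<sigma> \<in> ?TT2" "a \<in> ?NN0 - {?St}" "r = TB \<sigma> (NL a) Hole"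
      have "n' \<in> f ` ?NN1" using d nr by blast
      moreover have "r' = TB \<sigma> (NL (f a)) Hole" using d nr by simp
      ultimately show ?thesis using fa[OF d(3)] d(2) by blast
    qed
  qed
  have nf: "normal_form (rn f G)"
    unfolding normal_form_def
  proof (intro ballI)
    fix x assume "x \<in> prods (rn f G)"
    then obtain n r where nr: "(n, r) \<in> ?P" "x = (f n, mapn f r)" by (auto simp: rn_def rnP_def)
    show "case x of (n, r) \<Rightarrow> (n \<in> nts0 (rn f G) \<and>
          ((\<exists>b\<in>nts1 (rn f G). \<exists>\<alpha>\<in>ts0 (rn f G). r = NU b (TL \<alpha>)) \<or> (\<exists>\<alpha>\<in>ts0 (rn f G). r = TL \<alpha>))) \<or>
         (n \<in> nts1 (rn f G) \<and> (\<exists>b1\<in>nts1 (rn f G). \<exists>b2\<in>nts1 (rn f G). r = NU b1 (NU b2 Hole))) \<or>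
         (n \<in> nts1 (rn f G) \<and>
          (\<exists>\<sigma>\<in>ts2 (rn f G). \<exists>a\<in>nts0 (rn f G) - {start (rn f G)}. r = TB \<sigma> Hole (NL a) \<or> r = TB \<sigma> (NL a) Hole))"
      using nf1[OF nr(1) refl refl] nr(2) by (simp add: rn_def)
  qed
  have sp: "\<forall>n \<in> nts0 (rn f G). \<forall>t \<in> spinal (rn f G) n. n \<notin> nts0_of t"
  proof (intro ballI)
    fix n' t assume n': "n' \<in> nts0 (rn f G)" and t: "t \<in> spinal (rn f G) n'"
    obtain n where n: "n \<in> ?NN0" "n' = f n" using n' by (auto simp: rn_def)
    from t obtain t1 where t1: "step (f ` ?NN0) (f ` ?NN1) (rnP f ?P) (NL n') t1"
      "(step (f ` ?NN0) (f ` ?NN1) {p \<in> rnP f ?P. fst p \<in> f ` ?NN1})\<^sup>*\<^sup>* t1 t" "no_unary t" "holes t = 0"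
      by (auto simp: spinal_def rn_def)
    have sub0: "h ` f ` ?NN0 \<subseteq> ?NN0" "h ` f ` ?NN1 \<subseteq> ?NN1" using hf by auto
    have subP: "rnP h (rnP f ?P) \<subseteq> ?P"
    proof
      fix x assume "x \<in> rnP h (rnP f ?P)"
      then obtain m r where "(m, r) \<in> ?P" "x = (h (f m), mapn h (mapn f r))" by (auto simp: rnP_def)
      moreover have "h (f m) = m" using pG hf calculation by blast
      ultimately show "x \<in> ?P" using mm by auto
    qed
    have subP1: "rnP h {p \<in> rnP f ?P. fst p \<in> f ` ?NN1} \<subseteq> {p \<in> ?P. fst p \<in> ?NN1}"
    proof
      fix x assume "x \<in> rnP h {p \<in> rnP f ?P. fst p \<in> f ` ?NN1}"
      then obtain m r where mr: "(m, r) \<in> ?P" "f m \<in> f ` ?NN1" "x = (h (f m), mapn h (mapn f r))"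
        by (auto simp: rnP_def)
      have "m \<in> ?NN0 \<union> ?NN1" using pG mr by blast
      then have "m \<in> ?NN1" using mr injD by blast
      moreover have "h (f m) = m" using pG hf mr by blast
      ultimately show "x \<in> {p \<in> ?P. fst p \<in> ?NN1}" using mm mr by auto
    qed
    have hn: "h n' = n" using hf n by auto
    have "step ?NN0 ?NN1 ?P (NL n) (mapn h t1)"
      using step_mono[OF step_map[OF t1(1), of h] sub0 subP] hn by simp
    moreover have "(step ?NN0 ?NN1 {p \<in> ?P. fst p \<in> ?NN1})\<^sup>*\<^sup>* (mapn h t1) (mapn h t)"
      using steps_mono[OF steps_map[OF t1(2), of h]] sub0 subP1 by auto
    ultimately have "mapn h t \<in> spinal G n" using t1 by (auto simp: spinal_def)
    then have "n \<notin> nts0_of (mapn h t)" using nz n unfolding normalized_def by blast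
    then have "n \<notin> h ` nts0_of t" by simp
    then show "n' \<notin> nts0_of t" using hn by auto
  qed
  have lang': "lang (rn f G) = lang G"
  proof -
    have "(step (f ` ?NN0) (f ` ?NN1) (rnP f ?P))\<^sup>*\<^sup>* (NL (f ?St)) (embed u) \<longleftrightarrow> (step ?NN0 ?NN1 ?P)\<^sup>*\<^sup>* (NL ?St) (embed u)" for u
    proof
      assume a: "(step (f ` ?NN0) (f ` ?NN1) (rnP f ?P))\<^sup>*\<^sup>* (NL (f ?St)) (embed u)"
      have sub0: "h ` f ` ?NN0 \<subseteq> ?NN0" "h ` f ` ?NN1 \<subseteq> ?NN1" using hf by auto
      have subP: "rnP h (rnP f ?P) \<subseteq> ?P"
      proof
        fix x assume "x \<in> rnP h (rnP f ?P)"
        then obtain m r where "(m, r) \<in> ?P" "x = (h (f m), mapn h (mapn f r))" by (auto simp: rnP_def)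
        moreover have "h (f m) = m" using pG hf calculation by blast
        ultimately show "x \<in> ?P" using mm by auto
      qed
      show "(step ?NN0 ?NN1 ?P)\<^sup>*\<^sup>* (NL ?St) (embed u)"
        using steps_mono[OF steps_map[OF a, of h] sub0 subP] hf SN by simp
    next
      assume "(step ?NN0 ?NN1 ?P)\<^sup>*\<^sup>* (NL ?St) (embed u)"
      then show "(step (f ` ?NN0) (f ` ?NN1) (rnP f ?P))\<^sup>*\<^sup>* (NL (f ?St)) (embed u)"
        using steps_map[of ?NN0 ?NN1 ?P "NL ?St" "embed u" f] by simp
    qed
    then show ?thesis unfolding lang_def rn_def by simp
  qed
  show ?thesis using sg' nf sp lang' unfolding normalized_def by blast
qed


lemma spine_d': "spine_ok d C \<Longrightarrow> spine_ok (\<lambda>\<sigma>. if d \<sigma> = 2 then 2 else 1) C"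
  by (induction C) auto

theorem theorem4p5:
  fixes G :: "('n, 't) scftg"
  assumes "spine_grammar G"
  shows "\<exists>G' :: (nat, 't) scftg. spine_grammar G' \<and> normalized G' \<and> lang G' = lang G"
proof -
  have sc: "sCFTG G" using assms by (simp add: spine_grammar_def)
  obtain d where d: "\<forall>\<sigma>\<in>ts2 G. d \<sigma> \<in> {1, 2}" "\<forall>(n, C)\<in>prods G. n \<in> nts1 G \<longrightarrow> spine_ok d C"
    using assms by (auto simp: spine_grammar_def)
  define d' where "d' = (\<lambda>\<sigma>::'t. if d \<sigma> = 2 then 2 else (1::nat))"
  define K where "K = Suc (Max (insert 0 ((\<lambda>p. ht (snd p)) ` prods G)))"
  have finP: "finite (prods G)" using sc by (simp add: sCFTG_def)
  have htK: "ht r \<le> K" if "(n, r) \<in> prods G" for n r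
  proof -
    have "ht r \<in> insert 0 ((\<lambda>p. ht (snd p)) ` prods G)" using that by force
    then have "ht r \<le> Max (insert 0 ((\<lambda>p. ht (snd p)) ` prods G))" using finP by simp
    then show ?thesis by (simp add: K_def)
  qed
  have pG: "(n, r) \<in> prods G \<Longrightarrow> wf_tree (nts0 G) (nts1 G) (ts0 G) (ts2 G) r \<and>
     ((n \<in> nts0 G \<and> holes r = 0) \<or> (n \<in> nts1 G \<and> holes r = 1))" for n r
    using sc by (auto simp: sCFTG_def)
  interpret L: sl "nts0 G" "nts1 G" "prods G" "ts0 G" "ts2 G" "start G" d' K
  proof (unfold_locales)
    show "nts0 G \<inter> nts1 G = {}" using sc by (simp add: sCFTG_def)
  next
    fix n r assume "(n, r) \<in> prods G"
    then show "n \<in> nts0 G \<and> holes r = 0 \<or> n \<in> nts1 G \<and> holes r = 1" using pG by blast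
  next
    fix n r assume "(n, r) \<in> prods G"
    then show "wf_tree (nts0 G) (nts1 G) (ts0 G) (ts2 G) r \<and> ht r \<le> K" using pG htK by blast
  next
    fix n C assume "(n, C) \<in> prods G" "n \<in> nts1 G"
    then show "spine_ok d' C" using d(2) spine_d' unfolding d'_def by fast
  next
    fix \<sigma> show "d' \<sigma> = 1 \<or> d' \<sigma> = 2" by (simp add: d'_def)
  qed (use sc in \<open>auto simp: sCFTG_def K_def\<close>)
  have e: "prods L.G' = L.P'" "nts1 L.G' = L.N1'" "ts2 L.G' = ts2 G" by (simp_all add: L.G'_def)
  have d'12: "\<forall>\<sigma> \<in> ts2 L.G'. d' \<sigma> \<in> {1, 2}" by (simp add: d'_def)
  have sgG': "spine_grammar L.G'"
    unfolding spine_grammar_def using L.G'_sCFTG L.G'_spine d'12 unfolding e by blast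
  have langG': "lang L.G' = lang G"
    using L.lang_G' by (simp add: lang_def)
  have "finite (nts0 L.G' \<union> nts1 L.G')" using L.G'_sCFTG by (simp add: sCFTG_def)
  then obtain f :: "('n, 't) nt \<Rightarrow> nat" and m where "f ` (nts0 L.G' \<union> nts1 L.G') = {i. i < m}" "inj_on f (nts0 L.G' \<union> nts1 L.G')"
    using finite_imp_inj_to_nat_seg by blast
  then have "spine_grammar (rn f L.G') \<and> normalized (rn f L.G') \<and> lang (rn f L.G') = lang L.G'"
    using rename_ok[OF sgG' L.G'_normalized] by blast
  then show ?thesis using langG' by (intro exI[of _ "rn f L.G'"]) simp
qed

end
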